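(* Let $L \geq 1$ and $1 \leq n < L$, and suppose $p_k>0$ and $q_k>0$ for all $1\le k\le n$. Then the continuous-time Markov chain on $\Omega_{L,n}$ described in the context is irreducible; equivalently, the chain on $\mathcal{A}_{L,n}$ is irreducible.
   Context: Particle labels $k$ are taken modulo $n$ (in $\{1,\dots,n\}$), positions modulo $L$. $\Omega_{L,n}$ is the set of words $w_1\cdots w_L$ on the ring $\mathbb{Z}/L\mathbb{Z}$ over the alphabet $\{\bullet_1,\dots,\bullet_n,\Box_1,\dots,\Box_n\}$ in which each $\bullet_k$ occurs exactly once, the letters $\bullet_1,\dots,\bullet_n$ appear in this cyclic order around the ring, and the remaining $L-n$ letters are arbitrary $\Box_i$'s. The chain has transitions (displayed segments are consecutive positions on the ring, the rest unchanged, $C$ a possibly empty word in the $\Box$-letters only): (T1) $\bullet_k\Box_i \to \Box_i\bullet_k$ at rate $p_k$, if $i\neq k$; (T2) $\bullet_{k-1}\,C\,\bullet_k\Box_k \to \bullet_{k-1}\Box_{k-1}\,C\,\bullet_k$ at rate $p_k$; (T3) $\Box_i\bullet_k \to \bullet_k\Box_i$ at rate $q_k$, if $i\neq k$; (T4) $\Box_k\bullet_k\,C\,\bullet_{k+1} \to \bullet_k\,C\,\Box_{k+1}\bullet_{k+1}$ at rate $q_k$. $\mathcal{A}_{L,n}$ is the set of arrays with $n$ rows (indexed mod $n$) and $L$ columns (indexed mod $L$) with entries in $\{\cdot,\bullet,\Box\}$, exactly one $\bullet$ per row, exactly one non-$\cdot$ entry per column, and the columns of the $\bullet$'s in rows $1,\dots,n$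 cyclically increasing; it is identified with $\Omega_{L,n}$ by letting $w_j=\bullet_k$ (resp. $\Box_k$) when the particle in column $j$ is a $\bullet$ (resp. $\Box$) in row $k$, and carries the transported dynamics. *)

theory Defs
  imports Complex_Main
begin

text \<open>Letters: Bul k is the particle bullet_k, Box i is the hole letter box_i.
  Labels are taken in {0..<n} (the paper's label k corresponds to k-1 here);
  label arithmetic is mod n. Words on the ring Z/LZ are lists of length L,
  positions are read modulo L.\<close>

datatype letter = Bul nat | Box nat

fun is_bul :: "letter \<Rightarrow> bool" where
  "is_bul (Bul _) = True" | "is_bul (Box _) = False"

fun label :: "letter \<Rightarrow> nat" where
  "label (Bul k) = k" | "label (Box i) = i"

definition wat :: "letter list \<Rightarrow> nat \<Rightarrow> letter" where
  "wat w x = w ! (x mod length w)"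

definition Omega :: "nat \<Rightarrow> nat \<Rightarrow> letter list set" where
  "Omega L n = {w. length w = L
      \<and> (\<forall>j<L. label (w ! j) < n)
      \<and> (\<forall>k<n. card {j. j < L \<and> w ! j = Bul k} = 1)
      \<and> (\<forall>j<L. \<forall>k d. w ! j = Bul k \<and> 1 \<le> d \<and> is_bul (wat w (j + d))
             \<and> (\<forall>e. 1 \<le> e \<and> e < d \<longrightarrow> \<not> is_bul (wat w (j + e)))
           \<longrightarrow> wat w (j + d) = Bul ((k + 1) mod n))}"

text \<open>Distance (going backwards, resp. forwards) from position j to the nearest
  other particle slot; equals L if the particle at j is the only one.\<close>
definition prev_dist :: "letter list \<Rightarrow> nat \<Rightarrow> nat" where
  "prev_dist w j = (LEAST m. 1 \<le> m \<and> is_bul (wat w (j + length w - m)))"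

definition next_dist :: "letter list \<Rightarrow> nat \<Rightarrow> nat" where
  "next_dist w j = (LEAST m. 1 \<le> m \<and> is_bul (wat w (j + m)))"

text \<open>Result of (T2) for particle k at position j whose preceding particle is at
  distance m behind: bullet_{k-1} C bullet_k box_k -> bullet_{k-1} box_{k-1} C bullet_k.\<close>
definition t2_res :: "nat \<Rightarrow> letter list \<Rightarrow> nat \<Rightarrow> nat \<Rightarrow> nat \<Rightarrow> letter list" where
  "t2_res n w j m k = (let L = length w in
     map (\<lambda>x. let r = (j + 1 + L - x) mod L in
       if r = 0 then Bul k
       else if r < m then wat w (x + L - 1)
       else if r = m then Box ((k + n - 1) mod n)
       else w ! x) [0..<L])"

text \<open>Result of (T4) for particle k at position j whose following particle is at
  distance m ahead: box_k bullet_k C bullet_{k+1} -> bullet_k C box_{k+1} bullet_{k+1}.\<close>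
definition t4_res :: "nat \<Rightarrow> letter list \<Rightarrow> nat \<Rightarrow> nat \<Rightarrow> nat \<Rightarrow> letter list" where
  "t4_res n w j m k = (let L = length w in
     map (\<lambda>x. let r = (x + L - (j + L - 1) mod L) mod L in
       if r = 0 then Bul k
       else if r < m then wat w (x + 1)
       else if r = m then Box ((k + 1) mod n)
       else w ! x) [0..<L])"

definition rate_T1 :: "nat \<Rightarrow> (nat \<Rightarrow> real) \<Rightarrow> letter list \<Rightarrow> letter list \<Rightarrow> nat \<Rightarrow> real" where
  "rate_T1 n p w w' j = (let L = length w in
     case (wat w j, wat w (j + 1)) of
       (Bul k, Box i) \<Rightarrow>
         if i \<noteq> k \<and> w' = w[j mod L := Box i, (j + 1) mod L := Bul k] then p k else 0
     | _ \<Rightarrow> 0)"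

definition rate_T2 :: "nat \<Rightarrow> (nat \<Rightarrow> real) \<Rightarrow> letter list \<Rightarrow> letter list \<Rightarrow> nat \<Rightarrow> real" where
  "rate_T2 n p w w' j = (let L = length w; m = prev_dist w j in
     case (wat w j, wat w (j + 1)) of
       (Bul k, Box i) \<Rightarrow>
         if i = k \<and> wat w (j + L - m) = Bul ((k + n - 1) mod n)
            \<and> w' = t2_res n w j m k then p k else 0
     | _ \<Rightarrow> 0)"

definition rate_T3 :: "nat \<Rightarrow> (nat \<Rightarrow> real) \<Rightarrow> letter list \<Rightarrow> letter list \<Rightarrow> nat \<Rightarrow> real" where
  "rate_T3 n q w w' j = (let L = length w in
     case (wat w j, wat w (j + L - 1)) of
       (Bul k, Box i) \<Rightarrow>
         if i \<noteq> k \<and> w' = w[j mod L := Box i, (j + L - 1) mod L := Bul k] then q k else 0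
     | _ \<Rightarrow> 0)"

definition rate_T4 :: "nat \<Rightarrow> (nat \<Rightarrow> real) \<Rightarrow> letter list \<Rightarrow> letter list \<Rightarrow> nat \<Rightarrow> real" where
  "rate_T4 n q w w' j = (let L = length w; m = next_dist w j in
     case (wat w j, wat w (j + L - 1)) of
       (Bul k, Box i) \<Rightarrow>
         if i = k \<and> wat w (j + m) = Bul ((k + 1) mod n)
            \<and> w' = t4_res n w j m k then q k else 0
     | _ \<Rightarrow> 0)"

definition Q_rate :: "nat \<Rightarrow> (nat \<Rightarrow> real) \<Rightarrow> (nat \<Rightarrow> real) \<Rightarrow> letter list \<Rightarrow> letter list \<Rightarrow> real" where
  "Q_rate n p q w w' = (\<Sum>j<length w.
      rate_T1 n p w w' j + rate_T2 n p w w' j + rate_T3 n q w w' j + rate_T4 n q w w' j)"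

definition irreducible_ctmc :: "'a set \<Rightarrow> ('a \<Rightarrow> 'a \<Rightarrow> real) \<Rightarrow> bool" where
  "irreducible_ctmc S Q \<longleftrightarrow>
     (\<forall>x\<in>S. \<forall>y\<in>S. (x, y) \<in> {(a, b). a \<in> S \<and> b \<in> S \<and> a \<noteq> b \<and> Q a b > 0}\<^sup>*)"

end

theory Submission
  imports Defs
begin

lemma wat_lt: "x < length w \<Longrightarrow> wat w x = w ! x" by (simp add: wat_def)

lemma wat_cong: "x mod length w = y mod length w \<Longrightarrow> wat w x = wat w y" by (simp add: wat_def)

lemma wat_rotate1: "w \<noteq> [] \<Longrightarrow> wat (rotate1 w) x = wat w (Suc x)"
  unfolding wat_def by (simp add: nth_rotate1 mod_Suc_eq)

lemma wat_rotate: "w \<noteq> [] \<Longrightarrow> wat (rotate c w) x = wat w (x + c)"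
  unfolding wat_def by (simp add: nth_rotate mod_add_right_eq add.commute)

definition CC :: "nat \<Rightarrow> letter list \<Rightarrow> bool" where
 "CC n w \<longleftrightarrow> (\<forall>j<length w. \<forall>k d. w ! j = Bul k \<and> 1 \<le> d \<and> is_bul (wat w (j + d))
             \<and> (\<forall>e. 1 \<le> e \<and> e < d \<longrightarrow> \<not> is_bul (wat w (j + e)))
           \<longrightarrow> wat w (j + d) = Bul ((k + 1) mod n))"

lemma Omega_iff: "w \<in> Omega L n \<longleftrightarrow> length w = L \<and> (\<forall>x\<in>set w. label x < n)
   \<and> (\<forall>k<n. length (filter (\<lambda>x. x = Bul k) w) = 1) \<and> CC n w"
  unfolding Omega_def CC_def length_filter_conv_card
  by (auto simp: all_set_conv_all_nth)

lemma filter_rotate1_len: "length (filter P (rotate1 xs)) = length (filter P xs)"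
  by (cases xs) auto

lemma CC_rotate1: assumes "CC n w" "w \<noteq> []" shows "CC n (rotate1 w)"
  unfolding CC_def
proof (intro allI impI)
  fix j k d
  assume j: "j < length (rotate1 w)"
    and h: "rotate1 w ! j = Bul k \<and> 1 \<le> d \<and> is_bul (wat (rotate1 w) (j + d))
             \<and> (\<forall>e. 1 \<le> e \<and> e < d \<longrightarrow> \<not> is_bul (wat (rotate1 w) (j + e)))"
  define j0 where "j0 = Suc j mod length w"
  have j0: "j0 < length w" using assms(2) by (simp add: j0_def)
  have sh: "wat (rotate1 w) (j + e) = wat w (j0 + e)" for e
    using assms(2) by (simp add: wat_rotate1, simp add: wat_def j0_def mod_add_left_eq)
  have "w ! j0 = Bul k" using h j by (simp add: nth_rotate1 j0_def)
  then show "wat (rotate1 w) (j + d) = Bul ((k + 1) mod n)"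
    using assms(1) j0 h unfolding CC_def sh by blast
qed

lemma Omega_rotate1: "w \<in> Omega L n \<Longrightarrow> rotate1 w \<in> Omega L n"
  unfolding Omega_iff
  by (cases "w = []") (auto simp: filter_rotate1_len CC_rotate1)

lemma Omega_rotate: "w \<in> Omega L n \<Longrightarrow> rotate c w \<in> Omega L n"
  by (induction c) (auto simp: Omega_rotate1)


definition chain :: "nat \<Rightarrow> letter list \<Rightarrow> bool" where
 "chain n x \<longleftrightarrow> (\<forall>i j. i < j \<and> j < length x \<and> is_bul (x!i) \<and> is_bul (x!j)
     \<and> (\<forall>e. i<e \<and> e<j \<longrightarrow> \<not> is_bul (x!e)) \<longrightarrow> label (x!j) = (label (x!i) + 1) mod n)"

definition fb :: "nat \<Rightarrow> letter list \<Rightarrow> nat \<Rightarrow> bool" where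
 "fb n x a \<longleftrightarrow> (\<forall>j<length x. is_bul (x!j) \<and> (\<forall>e<j. \<not> is_bul (x!e)) \<longrightarrow> label (x!j) = (a+1) mod n)"

lemma chain_Nil[simp]: "chain n []" by (simp add: chain_def)

lemma chain_Cons: "chain n (c # x) \<longleftrightarrow> chain n x \<and> (is_bul c \<longrightarrow> fb n x (label c))"
proof
  assume H: "chain n (c # x)"
  have "chain n x" unfolding chain_def
  proof (intro allI impI)
    fix i j assume a: "i < j \<and> j < length x \<and> is_bul (x!i) \<and> is_bul (x!j) \<and> (\<forall>e. i<e \<and> e<j \<longrightarrow> \<not> is_bul (x!e))"
    have B: "\<forall>e. Suc i<e \<and> e<Suc j \<longrightarrow> \<not> is_bul ((c#x)!e)"
    proof (intro allI impI)
      fix e assume "Suc i<e \<and> e<Suc j" then obtain e' where "e = Suc e'" "i < e'" "e' < j" by (cases e) auto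
      then show "\<not> is_bul ((c#x)!e)" using a by simp
    qed
    show "label (x!j) = (label (x!i) + 1) mod n"
      using H[unfolded chain_def, rule_format, of "Suc i" "Suc j"] a B by simp
  qed
  moreover have "is_bul c \<longrightarrow> fb n x (label c)" unfolding fb_def
  proof (intro allI impI)
    fix j assume c: "is_bul c" and a: "j < length x" "is_bul (x!j) \<and> (\<forall>e<j. \<not> is_bul (x!e))"
    have B: "\<forall>e. 0<e \<and> e<Suc j \<longrightarrow> \<not> is_bul ((c#x)!e)"
    proof (intro allI impI)
      fix e assume "0<e \<and> e<Suc j" then obtain e' where "e = Suc e'" "e' < j" by (cases e) auto
      then show "\<not> is_bul ((c#x)!e)" using a by simp
    qed
    show "label (x!j) = (label c + 1) mod n"
      using H[unfolded chain_def, rule_format, of 0 "Suc j"] a c B by simp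
  qed
  ultimately show "chain n x \<and> (is_bul c \<longrightarrow> fb n x (label c))" by blast
next
  assume H: "chain n x \<and> (is_bul c \<longrightarrow> fb n x (label c))"
  show "chain n (c # x)" unfolding chain_def
  proof (intro allI impI)
    fix i j assume a: "i < j \<and> j < length (c#x) \<and> is_bul ((c#x)!i) \<and> is_bul ((c#x)!j) \<and> (\<forall>e. i<e \<and> e<j \<longrightarrow> \<not> is_bul ((c#x)!e))"
    then have B: "\<forall>e. i<e \<and> e<j \<longrightarrow> \<not> is_bul ((c#x)!e)" by blast
    from a obtain j' where j': "j = Suc j'" by (cases j) auto
    show "label ((c#x)!j) = (label ((c#x)!i) + 1) mod n"
    proof (cases i)
      case 0
      have "\<forall>e<j'. \<not> is_bul (x!e)"
      proof (intro allI impI)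
        fix e assume "e < j'"
        then show "\<not> is_bul (x!e)" using B[rule_format, of "Suc e"] j' 0 by simp
      qed
      then show ?thesis using H a j' 0 unfolding fb_def by auto
    next
      case (Suc i')
      have "\<forall>e. i'<e \<and> e<j' \<longrightarrow> \<not> is_bul (x!e)"
      proof (intro allI impI)
        fix e assume "i'<e \<and> e<j'"
        then show "\<not> is_bul (x!e)" using B[rule_format, of "Suc e"] j' Suc by simp
      qed
      then show ?thesis using H a j' Suc unfolding chain_def by auto
    qed
  qed
qed

lemma fb_Nil[simp]: "fb n [] a" by (simp add: fb_def)

lemma fb_Box[simp]: "fb n (Box b # x) a \<longleftrightarrow> fb n x a"
proof
  assume H: "fb n (Box b # x) a"
  show "fb n x a" unfolding fb_def
  proof (intro allI impI)
    fix j assume a: "j < length x" "is_bul (x!j) \<and> (\<forall>e<j. \<not> is_bul (x!e))"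
    have B: "\<forall>e<Suc j. \<not> is_bul ((Box b#x)!e)"
      using a by (auto simp: less_Suc_eq_0_disj)
    show "label (x!j) = (a + 1) mod n" using H[unfolded fb_def, rule_format, of "Suc j"] a B by simp
  qed
next
  assume H: "fb n x a"
  show "fb n (Box b # x) a" unfolding fb_def
  proof (intro allI impI)
    fix j assume a: "j < length (Box b # x)" "is_bul ((Box b # x)!j) \<and> (\<forall>e<j. \<not> is_bul ((Box b # x)!e))"
    then obtain j' where j': "j = Suc j'" by (cases j) auto
    have "\<forall>e<j'. \<not> is_bul (x!e)"
    proof (intro allI impI)
      fix e assume "e < j'" then show "\<not> is_bul (x!e)" using a j' by (auto dest!: spec[of _ "Suc e"])
    qed
    then show "label ((Box b # x)!j) = (a + 1) mod n" using H a j' unfolding fb_def by auto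
  qed
qed

lemma fb_Bul[simp]: "fb n (Bul b # x) a \<longleftrightarrow> b = (a + 1) mod n"
proof
  assume "fb n (Bul b # x) a" then show "b = (a + 1) mod n" unfolding fb_def
    by (auto dest!: spec[of _ 0])
next
  assume "b = (a + 1) mod n" then show "fb n (Bul b # x) a" unfolding fb_def
    by (auto simp: nth_Cons split: nat.splits)
qed

lemma fb_map_Box[simp]: "fb n (map Box c @ x) a \<longleftrightarrow> fb n x a"
  by (induction c) auto

lemma chain_Box[simp]: "chain n (Box b # x) \<longleftrightarrow> chain n x"
  by (simp add: chain_Cons)

lemma chain_Bul[simp]: "chain n (Bul a # x) \<longleftrightarrow> chain n x \<and> fb n x a"
  by (simp add: chain_Cons)

lemma chain_map_Box[simp]: "chain n (map Box c @ x) \<longleftrightarrow> chain n x"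
  by (induction c) auto

lemma chain_appendD: "chain n (y @ x) \<Longrightarrow> chain n x"
  by (induction y) (auto simp: chain_Cons)

lemma chain_segs: "chain n (concat (map (\<lambda>i. Bul ((a+i) mod n) # map Box (h i)) [0..<m]))"
proof (induction m arbitrary: a h)
  case 0 then show ?case by simp
next
  case (Suc m)
  have e: "[0..<Suc m] = 0 # map Suc [0..<m]" by (simp add: upt_conv_Cons map_Suc_upt)
  define rest where "rest = concat (map (\<lambda>i. Bul ((Suc a+i) mod n) # map Box (h (Suc i))) [0..<m])"
  have r: "chain n rest" unfolding rest_def using Suc.IH[of "Suc a" "\<lambda>i. h (Suc i)"] by simp
  have f: "fb n rest (a mod n)"
  proof (cases m)
    case 0 then show ?thesis by (simp add: rest_def)
  next
    case (Suc m')
    then have "[0..<m] = 0 # map Suc [0..<m']" by (simp add: upt_conv_Cons map_Suc_upt)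
    then show ?thesis by (simp add: rest_def mod_Suc_eq)
  qed
  have "concat (map (\<lambda>i. Bul ((a+i) mod n) # map Box (h i)) [0..<Suc m]) = Bul (a mod n) # map Box (h 0) @ rest"
    unfolding e rest_def by (simp add: comp_def)
  then show ?case using r f by simp
qed

lemma wat_append_self: "t < 2 * length w \<Longrightarrow> (w @ w) ! t = wat w t"
  unfolding wat_def by (auto simp: nth_append le_mod_geq)

lemma bul_eq: "is_bul c \<Longrightarrow> c = Bul (label c)" by (cases c) auto

lemma CC_of_chain: assumes "w \<noteq> []" "chain n (w @ w)" shows "CC n w"
  unfolding CC_def
proof (intro allI impI)
  fix j k d
  assume j: "j < length w" and h: "w ! j = Bul k \<and> 1 \<le> d \<and> is_bul (wat w (j + d))
             \<and> (\<forall>e. 1 \<le> e \<and> e < d \<longrightarrow> \<not> is_bul (wat w (j + e)))"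
  then have B: "\<forall>e. 1 \<le> e \<and> e < d \<longrightarrow> \<not> is_bul (wat w (j + e))" by blast
  define L where "L = length w"
  have L0: "L > 0" using assms(1) L_def by simp
  have dL: "d \<le> L"
  proof (rule ccontr)
    assume "\<not> d \<le> L"
    then have "\<not> is_bul (wat w (j + L))" using B[rule_format, of L] L0 by simp
    moreover have "wat w (j + L) = w ! j" using j L_def by (simp add: wat_def)
    ultimately show False using h by simp
  qed
  have 1: "(w @ w) ! j = Bul k" using h j by (simp add: nth_append)
  have 2: "(w @ w) ! (j + d) = wat w (j + d)" using j dL L_def by (intro wat_append_self) auto
  have 3: "\<forall>e. j<e \<and> e<j+d \<longrightarrow> \<not> is_bul ((w@w)!e)"
  proof (intro allI impI)
    fix e assume e: "j<e \<and> e<j+d"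
    then have "(w@w)!e = wat w (j + (e - j))" using j dL L_def by (simp add: wat_append_self)
    moreover have "1 \<le> e - j \<and> e - j < d" using e by auto
    then have "\<not> is_bul (wat w (j + (e - j)))" using B[rule_format, of "e - j"] by blast
    ultimately show "\<not> is_bul ((w@w)!e)" by simp
  qed
  have jd: "j < j + d" "j + d < length (w @ w)" using h j dL L_def by auto
  have "label ((w@w) ! (j+d)) = (label ((w@w)!j) + 1) mod n"
    using assms(2)[unfolded chain_def, rule_format, of j "j+d"] 1 2 3 h jd by simp
  then have "label (wat w (j + d)) = (k + 1) mod n" using 1 2 by simp
  then show "wat w (j + d) = Bul ((k + 1) mod n)" using h bul_eq by metis
qed

lemma chain_of_CC: assumes "CC n w" shows "chain n w"
  unfolding chain_def
proof (intro allI impI)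
  fix i j assume a: "i < j \<and> j < length w \<and> is_bul (w!i) \<and> is_bul (w!j) \<and> (\<forall>e. i<e \<and> e<j \<longrightarrow> \<not> is_bul (w!e))"
  define d where "d = j - i"
  have w1: "wat w (i + d) = w ! j" using a by (simp add: d_def wat_lt)
  have w2: "\<forall>e. 1 \<le> e \<and> e < d \<longrightarrow> \<not> is_bul (wat w (i + e))"
    using a by (auto simp: d_def wat_lt)
  have wi: "w ! i = Bul (label (w ! i))" using a bul_eq by blast
  have d1: "1 \<le> d" using a unfolding d_def by linarith
  have "wat w (i + d) = Bul ((label (w!i) + 1) mod n)"
    using assms[unfolded CC_def, rule_format, of i "label (w!i)" d] wi a w1 w2 d1 by simp
  then show "label (w!j) = (label (w!i) + 1) mod n" using w1 by simp
qed


definition seg :: "(nat \<Rightarrow> nat list) \<Rightarrow> nat \<Rightarrow> letter list" where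
  "seg g i = Bul i # map Box (g i)"

definition W :: "nat \<Rightarrow> (nat \<Rightarrow> nat list) \<Rightarrow> letter list" where
  "W n g = concat (map (seg g) [0..<n])"

definition valid :: "nat \<Rightarrow> nat \<Rightarrow> (nat \<Rightarrow> nat list) \<Rightarrow> bool" where
  "valid n L g \<longleftrightarrow> (\<forall>k<n. \<forall>x\<in>set (g k). x < n) \<and> length (W n g) = L"

lemma W_0[simp]: "W 0 g = []" by (simp add: W_def)
lemma W_Suc: "W (Suc n) g = W n g @ seg g n" by (simp add: W_def)

lemma W_segs: "W n g = concat (map (\<lambda>i. Bul ((0+i) mod n) # map Box (g (i mod n))) [0..<n])"
  unfolding W_def seg_def by (intro arg_cong[where f=concat] map_cong) auto

lemma WW_segs: "W n g @ W n g = concat (map (\<lambda>i. Bul ((0+i) mod n) # map Box (g (i mod n))) [0..<n+n])"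
proof -
  let ?F = "\<lambda>i. Bul ((0+i) mod n) # map Box (g (i mod n))"
  have e: "[0..<n+n] = [0..<n] @ map (\<lambda>i. i + n) [0..<n]"
    by (simp only: map_add_upt upt_add_eq_append[OF le0])
  have f: "map ?F (map (\<lambda>i. i + n) [0..<n]) = map ?F [0..<n]" by simp
  show ?thesis unfolding e map_append concat_append f W_segs[of n g, symmetric] by (rule refl)
qed

lemma W_nonempty: "1 \<le> n \<Longrightarrow> W n g \<noteq> []"
  by (cases n) (auto simp: W_Suc seg_def)

lemma CC_W: "1 \<le> n \<Longrightarrow> CC n (W n g)"
proof -
  assume n: "1 \<le> n"
  have "chain n (W n g @ W n g)" unfolding WW_segs by (rule chain_segs)
  then show ?thesis using n W_nonempty CC_of_chain by blast
qed

lemma filter_W: "length (filter (\<lambda>x. x = Bul k) (W n g)) = (if k < n then 1 else 0)"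
  by (induction n) (auto simp: W_Suc seg_def filter_empty_conv)

lemma set_W: "x \<in> set (W n g) \<longleftrightarrow> (\<exists>i<n. x = Bul i \<or> (\<exists>b\<in>set (g i). x = Box b))"
  by (auto simp: W_def seg_def)

lemma W_Omega: "valid n L g \<Longrightarrow> 1 \<le> n \<Longrightarrow> W n g \<in> Omega L n"
  unfolding Omega_iff valid_def
  by (auto simp: CC_W filter_W set_W)

lemma filter_is_bul_segs:
  "length (filter is_bul (concat (map (\<lambda>i. Bul (f i) # map Box (h i)) [0..<m]))) = m"
  by (induction m) (auto simp: filter_empty_conv)

lemma count_bul: "(\<forall>x\<in>set w. label x < n) \<Longrightarrow>
   length (filter is_bul w) = (\<Sum>k<n. length (filter (\<lambda>x. x = Bul k) w))"
proof (induction w)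
  case Nil then show ?case by simp
next
  case (Cons c w)
  then have IH: "length (filter is_bul w) = (\<Sum>k<n. length (filter (\<lambda>x. x = Bul k) w))" by simp
  show ?case
  proof (cases c)
    case (Bul a)
    then have a: "a < n" using Cons.prems by simp
    have "(\<Sum>k<n. length (filter (\<lambda>x. x = Bul k) (c # w)))
        = (\<Sum>k<n. length (filter (\<lambda>x. x = Bul k) w) + (if a = k then 1 else 0))"
      using Bul by (intro sum.cong) auto
    also have "\<dots> = (\<Sum>k<n. length (filter (\<lambda>x. x = Bul k) w)) + 1"
      using a by (simp add: sum.distrib)
    finally show ?thesis using IH Bul by simp
  next
    case (Box b) then show ?thesis using IH by simp
  qed
qed

lemma nonbul_map: "(\<forall>z\<in>set c. \<not> is_bul z) \<Longrightarrow> map Box (map label c) = c"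
proof (induction c)
  case (Cons a c) then show ?case by (cases a) auto
qed simp

lemma decomp: "chain n x \<Longrightarrow> x = Bul a # y \<Longrightarrow> a < n \<Longrightarrow>
   \<exists>m h. x = concat (map (\<lambda>i. Bul ((a+i) mod n) # map Box (h i)) [0..<Suc m])"
proof (induction "length x" arbitrary: x a y rule: less_induct)
  case less
  define c where "c = takeWhile (\<lambda>z. \<not> is_bul z) y"
  define z where "z = dropWhile (\<lambda>z. \<not> is_bul z) y"
  have y: "y = c @ z" by (simp add: c_def z_def)
  have cB: "map Box (map label c) = c" unfolding c_def
    by (rule nonbul_map) (auto dest: set_takeWhileD)
  have n0: "0 < n" using less.prems by simp
  show ?case
  proof (cases z)
    case Nil
    have "x = concat (map (\<lambda>i. Bul ((a+i) mod n) # map Box ((\<lambda>_. map label c) i)) [0..<Suc 0])"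
      using less.prems y Nil cB by simp
    then show ?thesis by (intro exI[where x=0] exI[where x="\<lambda>_. map label c"]) simp
  next
    case (Cons b z')
    have "is_bul b" using Cons unfolding z_def dropWhile_eq_Cons_conv by simp
    then obtain b' where b: "b = Bul b'" by (cases b) auto
    have ch: "chain n (Bul a # map Box (map label c) @ z)" using less.prems y cB by simp
    then have "fb n (map Box (map label c) @ z) a" by (simp only: chain_Bul)
    then have fbz: "fb n z a" by (simp only: fb_map_Box)
    then have b'v: "b' = (a+1) mod n" using Cons b by simp
    have "chain n (map Box (map label c) @ z)" using ch by (simp only: chain_Bul)
    then have chz: "chain n z" by (simp only: chain_map_Box)
    have lz: "length z < length x" using less.prems y by simp
    have b'n: "b' < n" using b'v n0 by simp
    obtain m' h' where IH: "z = concat (map (\<lambda>i. Bul ((b'+i) mod n) # map Box (h' i)) [0..<Suc m'])"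
      using less.hyps[OF lz chz _ b'n] Cons b by blast
    define h where "h = (\<lambda>i. if i = 0 then map label c else h' (i - 1))"
    have e: "[0..<Suc (Suc m')] = 0 # map Suc [0..<Suc m']" by (simp add: upt_conv_Cons map_Suc_upt del: upt_Suc)
    have m: "Suc (a + i) mod n = (b' + i) mod n" for i
      using b'v by (simp add: mod_add_left_eq)
    have "concat (map (\<lambda>i. Bul ((a+i) mod n) # map Box (h i)) [0..<Suc (Suc m')])
       = Bul (a mod n) # map Box (map label c) @ z"
      unfolding e IH by (simp add: h_def comp_def m del: upt_Suc)
    also have "\<dots> = x" using less.prems y cB by simp
    finally have "x = concat (map (\<lambda>i. Bul ((a+i) mod n) # map Box (h i)) [0..<Suc (Suc m')])" by simp
    then show ?thesis by blast
  qed
qed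

lemma Omega_decomp: assumes "w \<in> Omega L n" "1 \<le> n"
  shows "\<exists>c g. valid n L g \<and> w = rotate c (W n g)"
proof -
  have O: "length w = L" "\<forall>x\<in>set w. label x < n" "\<forall>k<n. length (filter (\<lambda>x. x = Bul k) w) = 1" "CC n w"
    using assms(1) unfolding Omega_iff by auto
  have "length (filter (\<lambda>x. x = Bul 0) w) = 1" using O(3) assms(2) by simp
  then have "filter (\<lambda>x. x = Bul 0) w \<noteq> []" by auto
  then have "Bul 0 \<in> set w" by (auto simp: filter_empty_conv)
  then obtain j0 where j0: "j0 < L" "w ! j0 = Bul 0" using O(1) by (auto simp: in_set_conv_nth)
  define w' where "w' = rotate j0 w"
  have L0: "0 < L" using j0 by simp
  have w'O: "w' \<in> Omega L n" unfolding w'_def using assms(1) by (rule Omega_rotate)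
  then have O': "length w' = L" "\<forall>x\<in>set w'. label x < n" "\<forall>k<n. length (filter (\<lambda>x. x = Bul k) w') = 1" "CC n w'"
    unfolding Omega_iff by auto
  have w'0: "w' ! 0 = Bul 0" using j0 O(1) L0 by (simp add: w'_def nth_rotate)
  have "w' = Bul 0 # tl w'" using w'0 O'(1) L0 by (cases w') auto
  then obtain m h where mh: "w' = concat (map (\<lambda>i. Bul ((0+i) mod n) # map Box (h i)) [0..<Suc m])"
    using decomp[OF chain_of_CC[OF O'(4)], of 0 "tl w'"] assms(2) by auto
  have "length (filter is_bul w') = (\<Sum>k<n. length (filter (\<lambda>x. x = Bul k) w'))"
    using O'(2) by (rule count_bul)
  also have "\<dots> = n" using O'(3) by simp
  finally have "length (filter is_bul w') = n" .
  moreover have "length (filter is_bul w') = Suc m" unfolding mh by (rule filter_is_bul_segs)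
  ultimately have Sm: "Suc m = n" by simp
  have Wh: "W n h = concat (map (\<lambda>i. Bul ((0+i) mod n) # map Box (h i)) [0..<n])"
    unfolding W_def seg_def by (intro arg_cong[where f=concat] map_cong) auto
  have w'W: "w' = W n h" using mh Wh Sm by simp
  have v: "valid n L h" unfolding valid_def
  proof
    show "\<forall>k<n. \<forall>x\<in>set (h k). x < n"
    proof (intro allI impI ballI)
      fix k x assume "k < n" "x \<in> set (h k)"
      then have "Box x \<in> set w'" using w'W set_W by blast
      then show "x < n" using O'(2) by fastforce
    qed
    show "length (W n h) = L" using w'W O'(1) by simp
  qed
  have "rotate (L - j0) w' = w" unfolding w'_def rotate_rotate using j0 O(1) by simp
  then show ?thesis using v w'W by blast
qed


lemma Suc_mod_inj: "i < L \<Longrightarrow> a < L \<Longrightarrow> (Suc i mod L = Suc a mod L) = (i = a)"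
  by (auto simp: mod_Suc split: if_splits)

lemma upd_rotate1: "a < length w \<Longrightarrow> (rotate1 w)[a := x] = rotate1 (w[Suc a mod length w := x])"
proof -
  assume a: "a < length w"
  then have "length w > 0" by linarith
  then have "Suc a mod length w < length w" by simp
  then show ?thesis using a by (intro nth_equalityI) (auto simp: nth_rotate1 nth_list_update Suc_mod_inj)
qed

lemma rotate1_eq_iff: "(rotate1 x = rotate1 y) = (x = y)"
  using inj_rotate1 unfolding inj_def by blast

lemma wat_rotate1': "w \<noteq> [] \<Longrightarrow> wat (rotate1 w) x = wat w (Suc x mod length w)"
  by (simp add: wat_rotate1) (simp add: wat_def)

lemma rT1_shift: assumes "w \<noteq> []"
  shows "rate_T1 n p (rotate1 w) (rotate1 w') j = rate_T1 n p w w' (Suc j mod length w)"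
proof -
  let ?L = "length w"
  have L: "?L > 0" using assms by simp
  have a: "wat (rotate1 w) j = wat w (Suc j mod ?L)" using assms by (simp add: wat_rotate1')
  have b: "wat (rotate1 w) (j+1) = wat w (Suc j mod ?L + 1)"
    using assms by (simp add: wat_rotate1) (simp add: wat_def mod_Suc_eq)
  have c: "(rotate1 w' = (rotate1 w)[j mod ?L := A, (j+1) mod ?L := B]) =
           (w' = w[(Suc j mod ?L) mod ?L := A, (Suc j mod ?L + 1) mod ?L := B])" for A B
  proof -
    have "(rotate1 w)[j mod ?L := A, (j+1) mod ?L := B]
        = rotate1 ((w[Suc (j mod ?L) mod ?L := A])[Suc ((j+1) mod ?L) mod ?L := B])"
      using L by (simp add: upd_rotate1)
    also have "Suc (j mod ?L) mod ?L = (Suc j mod ?L) mod ?L" by (simp add: mod_Suc_eq)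
    also have "Suc ((j+1) mod ?L) mod ?L = (Suc j mod ?L + 1) mod ?L" by (simp add: mod_Suc_eq)
    finally show ?thesis by (simp add: rotate1_eq_iff)
  qed
  show ?thesis unfolding rate_T1_def Let_def length_rotate1 a b c ..
qed

lemma Least_eq_bounded: fixes B :: nat
  assumes "P B" "P' B" "\<And>m. m \<le> B \<Longrightarrow> P m = P' m" shows "Least P = Least P'"
proof -
  have a: "Least P \<le> B" using assms(1) by (rule Least_le)
  have Pa: "P (Least P)" using assms(1) by (rule LeastI)
  show ?thesis
  proof (rule Least_equality[symmetric])
    show "P' (Least P)" using Pa a assms(3) by blast
    fix m assume "P' m"
    show "Least P \<le> m"
    proof (cases "m \<le> B")
      case True then have "P m" using \<open>P' m\<close> assms(3) by blast
      then show ?thesis by (rule Least_le)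
    next
      case False then show ?thesis using a by simp
    qed
  qed
qed

lemma wat_prev_rot: assumes "w \<noteq> []" "m \<le> length w"
  shows "wat (rotate1 w) (j + length w - m) = wat w (Suc j mod length w + length w - m)"
proof -
  let ?L = "length w"
  have e1: "j + ?L - m = j + (?L - m)" using assms by simp
  have e2: "Suc j mod ?L + ?L - m = Suc j mod ?L + (?L - m)" using assms by simp
  show ?thesis unfolding e1 e2 using assms(1)
    by (simp add: wat_rotate1) (simp add: wat_def mod_add_left_eq)
qed

lemma prev_dist_le: "w \<noteq> [] \<Longrightarrow> is_bul (wat w j) \<Longrightarrow> prev_dist w j \<le> length w"
  unfolding prev_dist_def by (rule Least_le) (simp add: Suc_leI)

lemma prev_dist_rot: assumes "w \<noteq> []" "is_bul (wat w (Suc j))"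
  shows "prev_dist (rotate1 w) j = prev_dist w (Suc j mod length w)"
  unfolding prev_dist_def length_rotate1
proof (rule Least_eq_bounded[where B="length w"])
  show "1 \<le> length w \<and> is_bul (wat (rotate1 w) (j + length w - length w))"
    using assms by (simp add: wat_rotate1 Suc_leI)
  show "1 \<le> length w \<and> is_bul (wat w (Suc j mod length w + length w - length w))"
    using assms by (simp add: wat_def Suc_leI)
  fix m assume "m \<le> length w"
  then show "(1 \<le> m \<and> is_bul (wat (rotate1 w) (j + length w - m))) =
             (1 \<le> m \<and> is_bul (wat w (Suc j mod length w + length w - m)))"
    using assms wat_prev_rot by simp
qed

lemma r_eq: assumes "x < L"
  shows "(Suc j mod L + 1 + L - Suc x mod L) mod L = (j + 1 + L - x) mod L"
proof (cases "Suc x < L")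
  case True
  then have e1: "Suc j mod L + 1 + L - Suc x mod L = Suc j mod L + (L - x)" by simp
  have e2: "j + 1 + L - x = Suc j + (L - x)" using assms by simp
  show ?thesis unfolding e1 e2 by (rule mod_add_left_eq)
next
  case False
  then have x: "Suc x = L" using assms by simp
  then have e1: "Suc j mod L + 1 + L - Suc x mod L = (Suc j mod L + 1) + L" by simp
  have e2: "j + 1 + L - x = Suc j + 1" using x by simp
  show ?thesis unfolding e1 e2 by (simp only: mod_add_self2 mod_add_left_eq)
qed

lemma t2_rot: assumes "w \<noteq> []"
  shows "t2_res n (rotate1 w) j m k = rotate1 (t2_res n w (Suc j mod length w) m k)"
proof (rule nth_equalityI)
  let ?L = "length w"
  show "length (t2_res n (rotate1 w) j m k) = length (rotate1 (t2_res n w (Suc j mod length w) m k))"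
    by (simp add: t2_res_def Let_def)
  fix x assume "x < length (t2_res n (rotate1 w) j m k)"
  then have x: "x < ?L" by (simp add: t2_res_def Let_def)
  have L0: "?L > 0" using x by linarith
  have sx: "Suc x mod ?L < ?L" using L0 by simp
  have w1: "wat (rotate1 w) (x + ?L - 1) = wat w (Suc x mod ?L + ?L - 1)"
  proof -
    have "x + ?L - 1 = x + (?L - 1)" "Suc x mod ?L + ?L - 1 = Suc x mod ?L + (?L - 1)" using x by auto
    then show ?thesis using assms by (simp add: wat_rotate1) (simp add: wat_def mod_add_left_eq)
  qed
  have "t2_res n (rotate1 w) j m k ! x = (let r = (j + 1 + ?L - x) mod ?L in
       if r = 0 then Bul k
       else if r < m then wat (rotate1 w) (x + ?L - 1)
       else if r = m then Box ((k + n - 1) mod n)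
       else rotate1 w ! x)" using x by (simp add: t2_res_def Let_def)
  also have "\<dots> = (let r = (Suc j mod ?L + 1 + ?L - Suc x mod ?L) mod ?L in
       if r = 0 then Bul k
       else if r < m then wat w (Suc x mod ?L + ?L - 1)
       else if r = m then Box ((k + n - 1) mod n)
       else w ! (Suc x mod ?L))"
    unfolding r_eq[OF x] w1 using x by (simp add: nth_rotate1 Let_def)
  also have "\<dots> = t2_res n w (Suc j mod ?L) m k ! (Suc x mod ?L)"
    using sx by (simp add: t2_res_def Let_def)
  also have "\<dots> = rotate1 (t2_res n w (Suc j mod length w) m k) ! x"
  proof -
    have "length (t2_res n w (Suc j mod length w) m k) = ?L" by (simp add: t2_res_def Let_def)
    then show ?thesis using x by (simp add: nth_rotate1)
  qed
  finally show "t2_res n (rotate1 w) j m k ! x = rotate1 (t2_res n w (Suc j mod length w) m k) ! x" .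
qed

lemma rT2_shift: assumes "w \<noteq> []"
  shows "rate_T2 n p (rotate1 w) (rotate1 w') j = rate_T2 n p w w' (Suc j mod length w)"
proof -
  let ?L = "length w"
  have a: "wat (rotate1 w) j = wat w (Suc j mod ?L)" using assms by (simp add: wat_rotate1')
  have b: "wat (rotate1 w) (j+1) = wat w (Suc j mod ?L + 1)"
    using assms by (simp add: wat_rotate1) (simp add: wat_def mod_Suc_eq)
  show ?thesis
  proof (cases "is_bul (wat w (Suc j))")
    case False
    then have "\<not> is_bul (wat w (Suc j mod ?L))" by (simp add: wat_def)
    then show ?thesis unfolding rate_T2_def Let_def length_rotate1 a b
      by (cases "wat w (Suc j mod ?L)") auto
  next
    case True
    define m where "m = prev_dist w (Suc j mod ?L)"
    have pd: "prev_dist (rotate1 w) j = m" unfolding m_def using assms True by (rule prev_dist_rot)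
    have mL: "m \<le> ?L" unfolding m_def using assms True by (intro prev_dist_le) (simp_all add: wat_def)
    have wm: "wat (rotate1 w) (j + ?L - m) = wat w (Suc j mod ?L + ?L - m)"
      using assms mL by (rule wat_prev_rot)
    have c: "(rotate1 w' = t2_res n (rotate1 w) j m k) = (w' = t2_res n w (Suc j mod ?L) m k)" for k
      using assms by (simp add: t2_rot rotate1_eq_iff)
    show ?thesis unfolding rate_T2_def Let_def length_rotate1 pd a b wm c m_def[symmetric] ..
  qed
qed

lemma rT3_shift: assumes "w \<noteq> []"
  shows "rate_T3 n p (rotate1 w) (rotate1 w') j = rate_T3 n p w w' (Suc j mod length w)"
proof -
  let ?L = "length w"
  have L: "?L > 0" using assms by simp
  have a: "wat (rotate1 w) j = wat w (Suc j mod ?L)" using assms by (simp add: wat_rotate1')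
  have b: "wat (rotate1 w) (j + ?L - 1) = wat w (Suc j mod ?L + ?L - 1)"
  proof -
    have "j + ?L - 1 = j + (?L - 1)" "Suc j mod ?L + ?L - 1 = Suc j mod ?L + (?L - 1)" using L by (simp_all del: length_greater_0_conv)
    then show ?thesis using assms by (simp add: wat_rotate1) (simp add: wat_def mod_add_left_eq)
  qed
  have c: "(rotate1 w' = (rotate1 w)[j mod ?L := A, (j + ?L - 1) mod ?L := B]) =
           (w' = w[(Suc j mod ?L) mod ?L := A, (Suc j mod ?L + ?L - 1) mod ?L := B])" for A B
  proof -
    have "(rotate1 w)[j mod ?L := A, (j + ?L - 1) mod ?L := B]
        = rotate1 ((w[Suc (j mod ?L) mod ?L := A])[Suc ((j + ?L - 1) mod ?L) mod ?L := B])"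
      using L by (simp add: upd_rotate1)
    also have "Suc (j mod ?L) mod ?L = (Suc j mod ?L) mod ?L" by (simp add: mod_Suc_eq)
    also have "Suc ((j + ?L - 1) mod ?L) mod ?L = (Suc j mod ?L + ?L - 1) mod ?L"
    proof -
      have "Suc ((j + ?L - 1) mod ?L) mod ?L = Suc (j + ?L - 1) mod ?L" by (simp add: mod_Suc_eq)
      also have "Suc (j + ?L - 1) = Suc j + (?L - 1)" using L by simp
      also have "(Suc j + (?L - 1)) mod ?L = (Suc j mod ?L + (?L - 1)) mod ?L" by (simp add: mod_add_left_eq)
      also have "Suc j mod ?L + (?L - 1) = Suc j mod ?L + ?L - 1" using L by arith
      finally show ?thesis .
    qed
    finally show ?thesis by (simp add: rotate1_eq_iff)
  qed
  show ?thesis unfolding rate_T3_def Let_def length_rotate1 a b c ..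
qed

definition Step :: "nat \<Rightarrow> (nat \<Rightarrow> real) \<Rightarrow> (nat \<Rightarrow> real) \<Rightarrow> letter list \<Rightarrow> letter list \<Rightarrow> bool" where
  "Step n p q w w' \<longleftrightarrow> (\<exists>j<length w. rate_T1 n p w w' j > 0 \<or> rate_T2 n p w w' j > 0 \<or> rate_T3 n q w w' j > 0)"

lemma Suc_pred_mod: "j < L \<Longrightarrow> Suc ((j + L - 1) mod L) mod L = j"
proof -
  assume j: "j < L"
  have "Suc ((j + L - 1) mod L) mod L = Suc (j + L - 1) mod L" by (simp add: mod_Suc_eq)
  also have "Suc (j + L - 1) = j + L" using j by simp
  finally show ?thesis using j by simp
qed

lemma Step_rotate1: assumes "Step n p q w w'" "w \<noteq> []"
  shows "Step n p q (rotate1 w) (rotate1 w')"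
proof -
  let ?L = "length w"
  obtain j where j: "j < ?L" "rate_T1 n p w w' j > 0 \<or> rate_T2 n p w w' j > 0 \<or> rate_T3 n q w w' j > 0"
    using assms(1) unfolding Step_def by blast
  define j' where "j' = (j + ?L - 1) mod ?L"
  have j': "j' < ?L" using assms(2) by (simp add: j'_def)
  have j'': "Suc j' mod ?L = j" unfolding j'_def using Suc_pred_mod[OF j(1)] .
  show ?thesis unfolding Step_def
    using j j' j'' assms(2) by (auto simp: rT1_shift rT2_shift rT3_shift intro!: exI[of _ j'])
qed

lemma wat_in_set: "w \<noteq> [] \<Longrightarrow> wat w j \<in> set w"
  by (simp add: wat_def)

context
  fixes n :: nat and p q :: "nat \<Rightarrow> real"
  assumes pq: "\<forall>k<n. p k > 0 \<and> q k > 0"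
begin

lemma rates_nonneg: assumes "\<forall>x\<in>set w. label x < n" "w \<noteq> []"
  shows "0 \<le> rate_T1 n p w w' j" "0 \<le> rate_T2 n p w w' j" "0 \<le> rate_T3 n q w w' j"
    "0 \<le> rate_T4 n q w w' j"
proof -
  have lt: "wat w j = Bul k \<Longrightarrow> k < n" for k
    using assms wat_in_set[of w j] by fastforce
  show "0 \<le> rate_T1 n p w w' j" unfolding rate_T1_def Let_def
    using lt pq by (auto split: letter.splits simp: less_imp_le)
  show "0 \<le> rate_T2 n p w w' j" unfolding rate_T2_def Let_def
    using lt pq by (auto split: letter.splits simp: less_imp_le)
  show "0 \<le> rate_T3 n q w w' j" unfolding rate_T3_def Let_def
    using lt pq by (auto split: letter.splits simp: less_imp_le)
  show "0 \<le> rate_T4 n q w w' j" unfolding rate_T4_def Let_def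
    using lt pq by (auto split: letter.splits simp: less_imp_le)
qed

lemma Step_Q: assumes "Step n p q w w'" "\<forall>x\<in>set w. label x < n" "w \<noteq> []"
  shows "Q_rate n p q w w' > 0"
proof -
  obtain j where j: "j < length w" "rate_T1 n p w w' j > 0 \<or> rate_T2 n p w w' j > 0 \<or> rate_T3 n q w w' j > 0"
    using assms(1) unfolding Step_def by blast
  note nn = rates_nonneg[OF assms(2,3)]
  have a: "0 < rate_T1 n p w w' j + rate_T2 n p w w' j + rate_T3 n q w w' j + rate_T4 n q w w' j"
    using j(2) nn[of w' j] by linarith
  have b: "\<And>i. i \<in> {..<length w} \<Longrightarrow> 0 \<le> rate_T1 n p w w' i + rate_T2 n p w w' i + rate_T3 n q w w' i + rate_T4 n q w w' i"
    using nn by (simp add: add_nonneg_nonneg)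
  have c: "j \<in> {..<length w}" using j by simp
  define f where "f i = rate_T1 n p w w' i + rate_T2 n p w w' i + rate_T3 n q w w' i + rate_T4 n q w w' i" for i
  have "0 < sum f {..<length w}"
    by (rule sum_pos2[of "{..<length w}" j f]) (use a b c in \<open>simp_all add: f_def\<close>)
  then show ?thesis by (simp add: Q_rate_def f_def)
qed

end


lemma r_small: fixes x a L :: nat shows "x \<le> a \<Longrightarrow> a < L \<Longrightarrow> (a + L - x) mod L = a - x"
proof -
  assume "x \<le> a" "a < L"
  then have e: "a + L - x = (a - x) + L" by arith
  have "(a + L - x) mod L = ((a - x) + L) mod L" unfolding e ..
  also have "\<dots> = (a - x) mod L" by (rule mod_add_self2)
  also have "\<dots> = a - x" using \<open>a < L\<close> by (intro mod_less) arith
  finally show ?thesis .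
qed

lemma r_big: fixes x a L :: nat shows "a < x \<Longrightarrow> x < L \<Longrightarrow> (a + L - x) mod L = a + L - x"
  by (intro mod_less) arith

lemma wat_pred: "1 \<le> x \<Longrightarrow> x \<le> length w \<Longrightarrow> wat w (x + length w - 1) = w ! (x - 1)"
proof -
  assume a: "1 \<le> x" "x \<le> length w"
  then have e: "x + length w - 1 = (x - 1) + length w" by arith
  have "(x + length w - 1) mod length w = ((x - 1) + length w) mod length w" unfolding e ..
  also have "\<dots> = (x - 1) mod length w" by (rule mod_add_self2)
  also have "\<dots> = x - 1" using a by (intro mod_less) arith
  finally show ?thesis unfolding wat_def by simp
qed

lemma t2_local:
  fixes u v :: "letter list" and c :: "nat list"
  assumes w: "w = u @ [Bul k'] @ map Box c @ [Bul k, Box k] @ v"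
    and j: "j = length u + 1 + length c" and m: "m = length c + 1"
  shows "t2_res n w j m k = u @ [Bul k', Box ((k + n - 1) mod n)] @ map Box c @ [Bul k] @ v"
proof (rule nth_equalityI)
  let ?L = "length w"
  have L: "?L = length u + length c + 3 + length v" using w by simp
  show "length (t2_res n w j m k) = length (u @ [Bul k', Box ((k + n - 1) mod n)] @ map Box c @ [Bul k] @ v)"
    using L by (simp add: t2_res_def Let_def)
  fix x assume "x < length (t2_res n w j m k)"
  then have x: "x < ?L" by (simp add: t2_res_def Let_def)
  have T: "t2_res n w j m k ! x = (let r = (j + 1 + ?L - x) mod ?L in
       if r = 0 then Bul k
       else if r < m then wat w (x + ?L - 1)
       else if r = m then Box ((k + n - 1) mod n)
       else w ! x)" using x by (simp add: t2_res_def Let_def)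
  have jL: "j + 1 < ?L" using L j by simp
  consider (a) "x < length u" | (b) "x = length u" | (c) "x = length u + 1"
    | (d) "length u + 2 \<le> x" "x \<le> j" | (e) "x = j + 1" | (f) "j + 1 < x"
    using j by linarith
  then show "t2_res n w j m k ! x = (u @ [Bul k', Box ((k + n - 1) mod n)] @ map Box c @ [Bul k] @ v) ! x"
  proof cases
    case a
    have "(j + 1 + ?L - x) mod ?L = j + 1 - x" using a jL j by (intro r_small) auto
    moreover have "j + 1 - x \<noteq> 0" "\<not> j + 1 - x < m" "j + 1 - x \<noteq> m" using a j m by auto
    ultimately show ?thesis unfolding T using a w by (simp add: nth_append)
  next
    case b
    have "(j + 1 + ?L - x) mod ?L = j + 1 - x" using b jL j by (intro r_small) auto
    moreover have "j + 1 - x \<noteq> 0" "\<not> j + 1 - x < m" "j + 1 - x \<noteq> m" using b j m by auto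
    ultimately show ?thesis unfolding T using b w by (simp add: nth_append)
  next
    case c
    have "(j + 1 + ?L - x) mod ?L = j + 1 - x" using c jL j by (intro r_small) auto
    moreover have "j + 1 - x \<noteq> 0" "\<not> j + 1 - x < m" "j + 1 - x = m" using c j m by auto
    ultimately show ?thesis unfolding T using c by (simp add: nth_append)
  next
    case d
    have r: "(j + 1 + ?L - x) mod ?L = j + 1 - x" using d jL j by (intro r_small) auto
    have wp: "wat w (x + ?L - 1) = w ! (x - 1)" using d x by (intro wat_pred) auto
    define i where "i = x - length u - 2"
    have i: "x = length u + 2 + i" "i < length c" using d j unfolding i_def by arith+
    have "w ! (x - 1) = Box (c ! i)" using i w by (simp add: nth_append)
    moreover have "(u @ [Bul k', Box ((k + n - 1) mod n)] @ map Box c @ [Bul k] @ v) ! x = Box (c ! i)"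
      using i by (simp add: nth_append)
    moreover have "j + 1 - x \<noteq> 0" "j + 1 - x < m" using d j m by auto
    ultimately show ?thesis unfolding T r wp by simp
  next
    case e
    have "(j + 1 + ?L - x) mod ?L = 0" using e jL by simp
    moreover have "x = length u + 2 + length c" using e j by simp
    ultimately show ?thesis unfolding T by (simp add: nth_append)
  next
    case f
    have "(j + 1 + ?L - x) mod ?L = j + 1 + ?L - x" using f x by (intro r_big) auto
    moreover have "j + 1 + ?L - x \<noteq> 0" "\<not> j + 1 + ?L - x < m" "j + 1 + ?L - x \<noteq> m" using f j m x L by auto
    ultimately show ?thesis unfolding T using f j w by (simp add: nth_append)
  qed
qed


lemma step_T1: assumes w: "w = u @ [Bul k, Box l] @ v" and "l \<noteq> k" "p k > 0"
  shows "Step n p q w (u @ [Box l, Bul k] @ v)"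
proof -
  let ?j = "length u" and ?L = "length w"
  have jL: "?j + 1 < ?L" by (simp add: w)
  have a: "wat w ?j = Bul k" "wat w (?j+1) = Box l" using jL by (simp_all add: wat_lt w nth_append)
  have b: "w[?j mod ?L := Box l, (?j+1) mod ?L := Bul k] = u @ [Box l, Bul k] @ v"
    using jL by (simp add: w list_update_append)
  have "rate_T1 n p w (u @ [Box l, Bul k] @ v) ?j = p k"
    unfolding rate_T1_def Let_def a using b assms(2) by simp
  then show ?thesis unfolding Step_def using jL assms(3) by (intro exI[of _ ?j]) auto
qed

lemma step_T3: assumes w: "w = u @ [Box l, Bul k] @ v" and "l \<noteq> k" "q k > 0"
  shows "Step n p q w (u @ [Bul k, Box l] @ v)"
proof -
  let ?j = "length u + 1" and ?L = "length w"
  have jL: "?j < ?L" by (simp add: w)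
  have a1: "wat w ?j = Bul k" using jL by (simp add: wat_lt w nth_append)
  have a2: "wat w (?j + ?L - 1) = Box l" using jL by (subst wat_pred) (auto simp: w nth_append)
  have m: "(?j + ?L - 1) mod ?L = length u"
  proof -
    have "?j + ?L - 1 = length u + ?L" by simp
    then show ?thesis using jL by simp
  qed
  have b: "w[?j mod ?L := Box l, (?j + ?L - 1) mod ?L := Bul k] = u @ [Bul k, Box l] @ v"
    unfolding m using jL by (simp add: w list_update_append)
  have "rate_T3 n q w (u @ [Bul k, Box l] @ v) ?j = q k"
    unfolding rate_T3_def Let_def a1 a2 using b assms(2) by simp
  then show ?thesis unfolding Step_def using jL assms(3) by (intro exI[of _ ?j]) auto
qed

lemma prev_dist_local:
  fixes u v :: "letter list" and c :: "nat list"
  assumes w: "w = u @ [Bul k'] @ map Box c @ [Bul k, Box k] @ v"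
  shows "prev_dist w (length u + 1 + length c) = length c + 1"
  unfolding prev_dist_def
proof (rule Least_equality)
  let ?j = "length u + 1 + length c" and ?L = "length w"
  have e: "?j + ?L - (length c + 1) = length u + ?L" by simp
  have "length u < ?L" by (simp add: w)
  then have "wat w (length u + ?L) = w ! length u" by (simp add: wat_def)
  then show "1 \<le> length c + 1 \<and> is_bul (wat w (?j + ?L - (length c + 1)))"
    unfolding e by (simp add: w nth_append)
  fix m assume P: "1 \<le> m \<and> is_bul (wat w (?j + ?L - m))"
  show "length c + 1 \<le> m"
  proof (rule ccontr)
    assume "\<not> length c + 1 \<le> m"
    then have m: "m \<le> length c" "1 \<le> m" using P by auto
    have e2: "?j + ?L - m = (?j - m) + ?L" using m by simp
    have jl: "?j - m < ?L" by (simp add: w)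
    have "wat w (?j + ?L - m) = w ! (?j - m)" unfolding e2 wat_def using jl by simp
    also have "?j - m = length u + 1 + (length c - m)" using m by simp
    also have "w ! (length u + 1 + (length c - m)) = Box (c ! (length c - m))"
    proof -
      define i where "i = length c - m"
      have "i < length c" using m unfolding i_def by arith
      then show ?thesis unfolding i_def[symmetric] by (simp add: w nth_append)
    qed
    finally show False using P by simp
  qed
qed

lemma step_T2:
  fixes u v :: "letter list" and c :: "nat list"
  assumes w: "w = u @ [Bul ((k + n - 1) mod n)] @ map Box c @ [Bul k, Box k] @ v" and "p k > 0"
  shows "Step n p q w (u @ [Bul ((k + n - 1) mod n), Box ((k + n - 1) mod n)] @ map Box c @ [Bul k] @ v)"
proof -
  let ?j = "length u + 1 + length c" and ?L = "length w"
  let ?w' = "u @ [Bul ((k + n - 1) mod n), Box ((k + n - 1) mod n)] @ map Box c @ [Bul k] @ v"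
  have jL: "?j + 1 < ?L" by (simp add: w)
  have a: "wat w ?j = Bul k" "wat w (?j+1) = Box k" using jL by (simp_all add: wat_lt w nth_append)
  have pd: "prev_dist w ?j = length c + 1" using w by (rule prev_dist_local)
  have e: "?j + ?L - (length c + 1) = length u + ?L" by simp
  have "length u < ?L" by (simp add: w)
  then have "wat w (length u + ?L) = w ! length u" by (simp add: wat_def)
  then have b: "wat w (?j + ?L - (length c + 1)) = Bul ((k + n - 1) mod n)"
    unfolding e by (simp add: w nth_append)
  have t: "t2_res n w ?j (length c + 1) k = ?w'" using w by (intro t2_local) auto
  have "rate_T2 n p w ?w' ?j = p k"
    unfolding rate_T2_def Let_def a pd b using t by simp
  then show ?thesis unfolding Step_def using jL assms(2) by (intro exI[of _ ?j]) auto
qed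


lemma W_split: assumes "k < n"
  shows "W n g = W k g @ seg g k @ concat (map (seg g) [Suc k..<n])"
proof -
  have "[0..<n] = [0..<k] @ k # [Suc k..<n]"
    using upt_add_eq_append[of 0 k "n-k"] upt_conv_Cons[of k n] assms by simp
  then show ?thesis unfolding W_def by simp
qed

lemma W_cong: "(\<And>i. i < k \<Longrightarrow> g i = h i) \<Longrightarrow> W k g = W k h"
  unfolding W_def seg_def by (intro arg_cong[where f=concat] map_cong) auto

lemma tail_cong: "(\<And>i. a \<le> i \<Longrightarrow> i < b \<Longrightarrow> g i = h i) \<Longrightarrow>
   concat (map (seg g) [a..<b]) = concat (map (seg h) [a..<b])"
  unfolding seg_def by (intro arg_cong[where f=concat] map_cong) auto

lemma W_split0: assumes "2 \<le> n"
  shows "W n g = seg g 0 @ concat (map (seg g) [1..<n-1]) @ seg g (n-1)"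
proof -
  have "[1..<n] = [1..<n-1] @ [n-1]" using upt_Suc_append[of 1 "n-1"] assms by simp
  then show ?thesis using W_split[of 0 n g] assms by simp
qed

lemma length_W: "length (W n g) = (\<Sum>i<n. Suc (length (g i)))"
  by (induction n) (auto simp: W_Suc seg_def)

lemma length_W_ins: assumes "i < n"
  shows "length (W n (g(i := x # g i))) = Suc (length (W n g))"
proof -
  have "(\<Sum>j<n. Suc (length ((g(i := x # g i)) j))) = (\<Sum>j<n. Suc (length (g j)) + (if j = i then 1 else 0))"
    by (intro sum.cong) auto
  also have "\<dots> = (\<Sum>j<n. Suc (length (g j))) + (\<Sum>j<n. (if j = i then 1 else 0))" by (rule sum.distrib)
  also have "(\<Sum>j<n. (if j = i then 1 else 0)) = (1::nat)" using assms by simp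
  finally show ?thesis by (simp add: length_W)
qed

locale irr =
  fixes n L :: nat and p q :: "nat \<Rightarrow> real"
  assumes n1: "1 \<le> n" and nL: "n < L" and pq: "\<forall>k<n. p k > 0 \<and> q k > 0"
begin

definition RR :: "(letter list \<times> letter list) set" where
  "RR = {(a,b). a \<in> Omega L n \<and> b \<in> Omega L n \<and> a \<noteq> b \<and> Step n p q a b}"

lemma L1: "1 \<le> L" using n1 nL by simp

lemma Omega_len: "w \<in> Omega L n \<Longrightarrow> length w = L" by (simp add: Omega_iff)
lemma Omega_ne: "w \<in> Omega L n \<Longrightarrow> w \<noteq> []" using L1 Omega_len by force

lemma RR_sub: "RR \<subseteq> {(a, b). a \<in> Omega L n \<and> b \<in> Omega L n \<and> a \<noteq> b \<and> Q_rate n p q a b > 0}"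
proof
  fix x assume "x \<in> RR"
  then obtain a b where x: "x = (a,b)" "a \<in> Omega L n" "b \<in> Omega L n" "a \<noteq> b" "Step n p q a b"
    unfolding RR_def by auto
  have "Q_rate n p q a b > 0" using Step_Q[OF pq x(5)] x(2) Omega_ne[OF x(2)] by (simp add: Omega_iff)
  then show "x \<in> {(a, b). a \<in> Omega L n \<and> b \<in> Omega L n \<and> a \<noteq> b \<and> Q_rate n p q a b > 0}"
    using x by simp
qed

lemma step_RR: "a \<in> Omega L n \<Longrightarrow> b \<in> Omega L n \<Longrightarrow> a \<noteq> b \<Longrightarrow> Step n p q a b \<Longrightarrow> (a,b) \<in> RR\<^sup>*"
  unfolding RR_def by auto

lemma RR_rot1: "(a,b) \<in> RR \<Longrightarrow> (rotate1 a, rotate1 b) \<in> RR"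
  unfolding RR_def using Omega_rotate1 Step_rotate1 Omega_ne by (auto simp: rotate1_eq_iff)

lemma RRs_rot1: "(a,b) \<in> RR\<^sup>* \<Longrightarrow> (rotate1 a, rotate1 b) \<in> RR\<^sup>*"
  by (induction rule: rtrancl_induct) (auto intro: rtrancl_into_rtrancl RR_rot1)

lemma RRs_rot: "(a,b) \<in> RR\<^sup>* \<Longrightarrow> (rotate c a, rotate c b) \<in> RR\<^sup>*"
  by (induction c) (auto simp: RRs_rot1)

lemma rot_L: "length x = L \<Longrightarrow> rotate (c + L) x = rotate c x"
  using rotate_conv_mod[of "c+L" x] rotate_conv_mod[of c x] by simp

lemma Rot: assumes "(x, rotate (L-1) x) \<in> RR\<^sup>*" "length x = L"
  shows "(rotate a x, rotate b x) \<in> RR\<^sup>*"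
proof -
  have bk: "(rotate (c + t) x, rotate c x) \<in> RR\<^sup>*" for c t
  proof (induction t)
    case 0 show ?case by simp
  next
    case (Suc t)
    have "(rotate (c + Suc t) x, rotate (c + Suc t) (rotate (L-1) x)) \<in> RR\<^sup>*" using RRs_rot[OF assms(1)] .
    moreover have "rotate (c + Suc t) (rotate (L-1) x) = rotate (c + t) x"
    proof -
      have "c + Suc t + (L - 1) = (c + t) + L" using L1 by simp
      then have "rotate (c + Suc t) (rotate (L-1) x) = rotate ((c + t) + L) x" by (simp add: rotate_rotate)
      also have "\<dots> = rotate (c + t) x" using assms(2) by (rule rot_L)
      finally show ?thesis .
    qed
    ultimately have "(rotate (c + Suc t) x, rotate (c + t) x) \<in> RR\<^sup>*" by simp
    then show ?case using Suc.IH by (rule rtrancl_trans)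
  qed
  define t where "t = a mod L + L - b mod L"
  have "(b + t) mod L = a mod L"
  proof -
    have bl: "b mod L < L" using L1 by simp
    have "(b + t) mod L = (b mod L + t) mod L" by (simp add: mod_add_left_eq)
    also have "b mod L + t = a mod L + L" unfolding t_def using bl by simp
    finally show ?thesis by simp
  qed
  then have "rotate a x = rotate (b + t) x" using assms(2) rotate_conv_mod[of a x] rotate_conv_mod[of "b+t" x] by simp
  then show ?thesis using bk[of b t] by simp
qed

definition E :: "letter list \<Rightarrow> letter list \<Rightarrow> bool" where
  "E x y \<longleftrightarrow> (x,y) \<in> RR\<^sup>* \<and> (y,x) \<in> RR\<^sup>*"

lemma E_refl: "E x x" by (simp add: E_def)
lemma E_sym: "E x y \<Longrightarrow> E y x" by (simp add: E_def)
lemma E_trans: "E x y \<Longrightarrow> E y z \<Longrightarrow> E x z" unfolding E_def by (meson rtrancl_trans)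
lemma E_rot: "E x y \<Longrightarrow> E (rotate c x) (rotate c y)" unfolding E_def by (simp add: RRs_rot)

definition AE :: "(nat \<Rightarrow> nat list) \<Rightarrow> (nat \<Rightarrow> nat list) \<Rightarrow> bool" where
  "AE g h \<longleftrightarrow> (\<exists>d. E (W n g) (rotate d (W n h)))"

lemma AE_refl: "AE g g" unfolding AE_def by (intro exI[of _ 0]) (simp add: E_refl)

lemma AE_trans: assumes "AE g h" "AE h k" shows "AE g k"
proof -
  obtain d where d: "E (W n g) (rotate d (W n h))" using assms(1) AE_def by blast
  obtain e where e: "E (W n h) (rotate e (W n k))" using assms(2) AE_def by blast
  have "E (rotate d (W n h)) (rotate (d + e) (W n k))" using E_rot[OF e, of d] by (simp add: rotate_rotate)
  then show ?thesis unfolding AE_def using E_trans[OF d] by blast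
qed

lemma valid_upd: assumes "valid n L g" "\<forall>x\<in>set A. x < n" "\<forall>x\<in>set B. x < n"
  "length (W n (g(a := A, b := B))) = L"
  shows "valid n L (g(a := A, b := B))"
  using assms unfolding valid_def by auto

lemma valid_lab: "valid n L g \<Longrightarrow> k < n \<Longrightarrow> x \<in> set (g k) \<Longrightarrow> x < n"
  unfolding valid_def by auto

lemma valid_Omega: "valid n L g \<Longrightarrow> W n g \<in> Omega L n" using W_Omega n1 by blast

end


context irr begin

definition pr :: "nat \<Rightarrow> nat" where "pr k = (k + n - 1) mod n"

lemma pr_pos: "1 \<le> k \<Longrightarrow> k < n \<Longrightarrow> pr k = k - 1"
proof -
  assume "1 \<le> k" "k < n"
  then have e: "k + n - 1 = (k - 1) + n" by simp
  have "pr k = ((k - 1) + n) mod n" unfolding pr_def e ..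
  also have "\<dots> = k - 1" using \<open>k < n\<close> by simp
  finally show ?thesis .
qed

lemma pr_0: "pr 0 = n - 1" using n1 by (simp add: pr_def)
lemma pr_lt: "pr k < n" using n1 by (simp add: pr_def)
lemma pr_neq: "2 \<le> n \<Longrightarrow> k < n \<Longrightarrow> pr k \<noteq> k"
  by (cases "k = 0") (auto simp: pr_0 pr_pos)

lemma pq_p: "k < n \<Longrightarrow> p k > 0" using pq by blast
lemma pq_q: "k < n \<Longrightarrow> q k > 0" using pq by blast

lemma M1_pos: assumes v: "valid n L g" and k: "Suc k < n" and gk: "g (Suc k) = l # t" and lk: "l \<noteq> Suc k"
  shows "valid n L (g(k := g k @ [l], Suc k := t)) \<and> AE g (g(k := g k @ [l], Suc k := t))"
proof -
  define h where "h = g(k := g k @ [l], Suc k := t)"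
  define T where "T = concat (map (seg g) [Suc (Suc k)..<n])"
  define u where "u = W k g @ seg g k"
  have Wk: "W (Suc k) g = u" by (simp add: u_def W_Suc)
  have Wg: "W n g = u @ [Bul (Suc k), Box l] @ (map Box t @ T)"
    using W_split[OF k, of g] Wk gk by (simp add: seg_def T_def)
  have "W k h = W k g" by (rule W_cong) (auto simp: h_def)
  moreover have "seg h k = seg g k @ [Box l]" by (simp add: h_def seg_def)
  ultimately have Whk: "W (Suc k) h = u @ [Box l]" by (simp add: u_def W_Suc)
  have Th: "concat (map (seg h) [Suc (Suc k)..<n]) = T" unfolding T_def by (rule tail_cong) (auto simp: h_def)
  have Wh: "W n h = u @ [Box l, Bul (Suc k)] @ (map Box t @ T)"
    using W_split[OF k, of h] Whk Th by (simp add: seg_def h_def)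
  have lenh: "length (W n h) = L" using v Wg Wh by (simp add: valid_def)
  have vh: "valid n L h" unfolding h_def
  proof (rule valid_upd[OF v])
    have a: "\<forall>x\<in>set (g k). x < n" using k valid_lab[OF v, of k] by auto
    have b: "\<forall>x\<in>set (g (Suc k)). x < n" using k valid_lab[OF v, of "Suc k"] by auto
    show "\<forall>x\<in>set (g k @ [l]). x < n" using a b gk by auto
    show "\<forall>x\<in>set t. x < n" using b gk by auto
  qed (use lenh h_def in simp)
  have Og: "W n g \<in> Omega L n" using v by (rule valid_Omega)
  have Oh: "W n h \<in> Omega L n" using vh by (rule valid_Omega)
  have ne: "W n g \<noteq> W n h" unfolding Wg Wh by simp
  have f: "Step n p q (W n g) (W n h)" unfolding Wh using step_T1[where p=p and q=q and n=n, OF Wg lk pq_p[OF k]] .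
  have b: "Step n p q (W n h) (W n g)" unfolding Wg using step_T3[where p=p and q=q and n=n, OF Wh lk pq_q[OF k]] .
  have "E (W n g) (rotate 0 (W n h))" unfolding E_def using step_RR Og Oh ne f b by simp
  then show ?thesis using vh unfolding AE_def h_def by blast
qed

lemma M1_zero: assumes v: "valid n L g" and n2: "2 \<le> n" and gk: "g 0 = l # t" and lk: "l \<noteq> 0"
  shows "valid n L (g(n-1 := g (n-1) @ [l], 0 := t)) \<and> AE g (g(n-1 := g (n-1) @ [l], 0 := t))"
proof -
  define h where "h = g(n-1 := g (n-1) @ [l], 0 := t)"
  define M where "M = concat (map (seg g) [1..<n-1])"
  have Wg: "W n g = [] @ [Bul 0, Box l] @ (map Box t @ M @ seg g (n-1))"
    using W_split0[OF n2, of g] gk by (simp add: seg_def M_def)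
  define Z where "Z = [] @ [Box l, Bul 0] @ (map Box t @ M @ seg g (n-1))"
  have Mh: "concat (map (seg h) [1..<n-1]) = M" unfolding M_def by (rule tail_cong) (auto simp: h_def)
  have sh: "seg h (n-1) = seg g (n-1) @ [Box l]" using n2 by (simp add: h_def seg_def)
  have Wh: "W n h = (Bul 0 # map Box t) @ M @ (seg g (n-1) @ [Box l])"
    using W_split0[OF n2, of h] Mh sh by (simp add: seg_def h_def)
  have rZ: "rotate1 Z = W n h" unfolding Wh Z_def by simp
  have lenZ: "length Z = L" using v Wg by (simp add: Z_def valid_def)
  have Zr: "Z = rotate (L-1) (W n h)"
  proof -
    have "rotate (L-1) (W n h) = rotate (L - 1) (rotate 1 Z)" using rZ by simp
    also have "\<dots> = rotate (L - 1 + 1) Z" by (rule rotate_rotate)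
    also have "\<dots> = rotate L Z" using L1 by (simp only: le_add_diff_inverse2)
    also have "\<dots> = Z" using lenZ by simp
    finally show ?thesis by simp
  qed
  have lenh: "length (W n h) = L" using lenZ rZ by (metis length_rotate1)
  have n0: "0 < n" using n2 by simp
  have vh: "valid n L h" unfolding h_def
  proof (rule valid_upd[OF v])
    show "\<forall>x\<in>set (g (n - 1) @ [l]). x < n" using v gk n2 valid_lab[OF v, of "n-1"] valid_lab[OF v, of 0] by auto
    show "\<forall>x\<in>set t. x < n" using gk n0 valid_lab[OF v, of 0] by auto
  qed (use lenh h_def in simp)
  have Og: "W n g \<in> Omega L n" using v by (rule valid_Omega)
  have Oh: "W n h \<in> Omega L n" using vh by (rule valid_Omega)
  have OZ: "Z \<in> Omega L n" unfolding Zr using Oh by (rule Omega_rotate)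
  have ne: "W n g \<noteq> Z" unfolding Wg Z_def by simp
  have f: "Step n p q (W n g) Z" unfolding Z_def using step_T1[where p=p and q=q and n=n, OF Wg lk pq_p[OF n0]] .
  have b: "Step n p q Z (W n g)" unfolding Wg using step_T3[where p=p and q=q and n=n, OF Z_def lk pq_q[OF n0]] .
  have "E (W n g) (rotate (L-1) (W n h))" unfolding E_def Zr[symmetric] using step_RR Og OZ ne f b by simp
  then show ?thesis using vh unfolding AE_def h_def by blast
qed

lemma M1: assumes v: "valid n L g" and n2: "2 \<le> n" and k: "k < n" and gk: "g k = l # t" and lk: "l \<noteq> k"
  shows "valid n L (g(pr k := g (pr k) @ [l], k := t)) \<and> AE g (g(pr k := g (pr k) @ [l], k := t))"
proof (cases "k = 0")
  case True then show ?thesis using M1_zero[OF v n2] gk lk by (simp add: pr_0)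
next
  case False
  then obtain k' where k': "k = Suc k'" by (cases k) auto
  have "pr k = k'" using k k' by (simp add: pr_pos)
  then show ?thesis using M1_pos[OF v, of k' l t] k gk lk k' by simp
qed

end


lemma ne_T2: "u @ [Bul a] @ map Box c @ [Bul k, Box k] @ v \<noteq> u @ [Bul a, Box a] @ map Box c @ [Bul k] @ v"
proof
  assume H: "u @ [Bul a] @ map Box c @ [Bul k, Box k] @ v = u @ [Bul a, Box a] @ map Box c @ [Bul k] @ v"
  let ?N = "length u + 2 + length c"
  have "length (filter is_bul (take ?N (u @ [Bul a] @ map Box c @ [Bul k, Box k] @ v))) = length (filter is_bul u) + 2"
    by (simp add: filter_empty_conv)
  moreover have "length (filter is_bul (take ?N (u @ [Bul a, Box a] @ map Box c @ [Bul k] @ v))) = length (filter is_bul u) + 1"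
    by (simp add: filter_empty_conv)
  ultimately show False using H by simp
qed

context irr begin

lemma M2_pos: assumes v: "valid n L g" and k: "Suc k < n" and gk: "g (Suc k) = Suc k # t"
  shows "valid n L (g(k := k # g k, Suc k := t)) \<and> (W n g, W n (g(k := k # g k, Suc k := t))) \<in> RR\<^sup>*"
proof -
  define h where "h = g(k := k # g k, Suc k := t)"
  define T where "T = concat (map (seg g) [Suc (Suc k)..<n])"
  have e: "(Suc k + n - 1) mod n = k" using k by simp
  have Wg: "W n g = W k g @ [Bul ((Suc k + n - 1) mod n)] @ map Box (g k) @ [Bul (Suc k), Box (Suc k)] @ (map Box t @ T)"
    using W_split[OF k, of g] gk unfolding e by (simp add: seg_def T_def W_Suc)
  have "W k h = W k g" by (rule W_cong) (auto simp: h_def)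
  moreover have "seg h k = [Bul k, Box k] @ map Box (g k)" by (simp add: h_def seg_def)
  ultimately have Whk: "W (Suc k) h = W k g @ [Bul k, Box k] @ map Box (g k)" by (simp add: W_Suc)
  have Th: "concat (map (seg h) [Suc (Suc k)..<n]) = T" unfolding T_def by (rule tail_cong) (auto simp: h_def)
  have Wh: "W n h = W k g @ [Bul ((Suc k + n - 1) mod n), Box ((Suc k + n - 1) mod n)] @ map Box (g k) @ [Bul (Suc k)] @ (map Box t @ T)"
    using W_split[OF k, of h] Whk Th unfolding e by (simp add: seg_def h_def)
  have lenh: "length (W n h) = L" using v Wg Wh by (simp add: valid_def)
  have vh: "valid n L h" unfolding h_def
  proof (rule valid_upd[OF v])
    have a: "\<forall>x\<in>set (g k). x < n" using k valid_lab[OF v, of k] by auto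
    have b: "\<forall>x\<in>set (g (Suc k)). x < n" using k valid_lab[OF v, of "Suc k"] by auto
    show "\<forall>x\<in>set (k # g k). x < n" using a k by auto
    show "\<forall>x\<in>set t. x < n" using b gk by auto
  qed (use lenh h_def in simp)
  have Og: "W n g \<in> Omega L n" using v by (rule valid_Omega)
  have Oh: "W n h \<in> Omega L n" using vh by (rule valid_Omega)
  have ne: "W n g \<noteq> W n h" unfolding Wg Wh by (rule ne_T2)
  have f: "Step n p q (W n g) (W n h)" unfolding Wh using step_T2[where p=p and q=q and n=n, OF Wg pq_p[OF k]] by simp
  show ?thesis using vh step_RR[OF Og Oh ne f] unfolding h_def by blast
qed

lemma M2_zero: assumes v: "valid n L g" and n2: "2 \<le> n" and gk: "g 0 = 0 # t"
  shows "valid n L (g(n-1 := (n-1) # g (n-1), 0 := t)) \<and>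
    (W n g, rotate (L-1) (W n (g(n-1 := (n-1) # g (n-1), 0 := t)))) \<in> RR\<^sup>*"
proof -
  define h where "h = g(n-1 := (n-1) # g (n-1), 0 := t)"
  define M where "M = concat (map (seg g) [1..<n-1])"
  define X where "X = [Bul 0, Box 0] @ map Box t @ M"
  define X' where "X' = Bul 0 # map Box t @ M"
  have e: "(0 + n - 1) mod n = n - 1" using n2 by simp
  have Wg: "W n g = X @ seg g (n-1)"
    using W_split0[OF n2, of g] gk by (simp add: seg_def M_def X_def)
  have Mh: "concat (map (seg h) [1..<n-1]) = M" unfolding M_def by (rule tail_cong) (auto simp: h_def)
  have n10: "n - 1 \<noteq> 0" using n2 by simp
  have sh: "seg h (n-1) = Bul (n-1) # Box (n-1) # map Box (g (n-1))" using n10 by (simp add: h_def seg_def)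
  have Wh: "W n h = X' @ seg h (n-1)"
    using W_split0[OF n2, of h] Mh by (simp add: seg_def h_def X'_def)
  have lenX: "length X = Suc (length X')" by (simp add: X_def X'_def)
  have lenWg: "length (W n g) = L" using v by (simp add: valid_def)
  have lenh: "length (W n h) = L" using lenWg Wg Wh lenX sh by (simp add: seg_def)
  have vh: "valid n L h" unfolding h_def
  proof (rule valid_upd[OF v])
    have a: "\<forall>x\<in>set (g (n-1)). x < n" using n2 valid_lab[OF v, of "n-1"] by auto
    have b: "\<forall>x\<in>set (g 0). x < n" using n2 valid_lab[OF v, of 0] by auto
    show "\<forall>x\<in>set ((n-1) # g (n-1)). x < n" using a n2 by auto
    show "\<forall>x\<in>set t. x < n" using b gk by auto
  qed (use lenh h_def in simp)
  have r1: "rotate (length X) (W n g) = [] @ [Bul ((0 + n - 1) mod n)] @ map Box (g (n-1)) @ [Bul 0, Box 0] @ (map Box t @ M)"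
    unfolding Wg rotate_append unfolding e by (simp add: seg_def X_def)
  have r2: "rotate (length X') (W n h) = [] @ [Bul ((0 + n - 1) mod n), Box ((0 + n - 1) mod n)] @ map Box (g (n-1)) @ [Bul 0] @ (map Box t @ M)"
    unfolding Wh rotate_append sh unfolding e by (simp add: X'_def)
  have O1: "rotate (length X) (W n g) \<in> Omega L n" using valid_Omega[OF v] by (rule Omega_rotate)
  have O2: "rotate (length X') (W n h) \<in> Omega L n" using valid_Omega[OF vh] by (rule Omega_rotate)
  have ne: "rotate (length X) (W n g) \<noteq> rotate (length X') (W n h)" unfolding r1 r2 by (rule ne_T2)
  have f: "Step n p q (rotate (length X) (W n g)) (rotate (length X') (W n h))"
    unfolding r2 using step_T2[where p=p and q=q and n=n, OF r1 pq_p] n2 by simp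
  have R: "(rotate (length X) (W n g), rotate (length X') (W n h)) \<in> RR\<^sup>*" using step_RR[OF O1 O2 ne f] .
  have lX: "length X \<le> L" using lenWg Wg by simp
  have "(rotate (L - length X) (rotate (length X) (W n g)), rotate (L - length X) (rotate (length X') (W n h))) \<in> RR\<^sup>*"
    using RRs_rot[OF R] .
  moreover have "rotate (L - length X) (rotate (length X) (W n g)) = W n g"
    using lX lenWg by (simp add: rotate_rotate)
  moreover have "rotate (L - length X) (rotate (length X') (W n h)) = rotate (L - 1) (W n h)"
  proof -
    have "L - length X + length X' = L - 1" using lX lenX by simp
    then show ?thesis by (simp add: rotate_rotate)
  qed
  ultimately show ?thesis using vh unfolding h_def by simp
qed

lemma M2: assumes v: "valid n L g" and n2: "2 \<le> n" and k: "k < n" and gk: "g k = k # t"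
  shows "valid n L (g(pr k := pr k # g (pr k), k := t)) \<and>
     (W n g, rotate (if k = 0 then L - 1 else 0) (W n (g(pr k := pr k # g (pr k), k := t)))) \<in> RR\<^sup>*"
proof (cases "k = 0")
  case True then show ?thesis using M2_zero[OF v n2] gk by (simp add: pr_0)
next
  case False
  then obtain k' where k': "k = Suc k'" by (cases k) auto
  have "pr k = k'" using k k' by (simp add: pr_pos)
  then show ?thesis using M2_pos[OF v, of k' t] k gk k' by simp
qed

end


definition ins :: "(nat \<Rightarrow> nat list) \<Rightarrow> nat \<Rightarrow> (nat \<Rightarrow> nat list)" where
  "ins g0 i = g0(i := i # g0 i)"

context irr begin

lemma ins_step: "2 \<le> n \<Longrightarrow> i < n \<Longrightarrow>
  (ins g0 i)(pr i := pr i # (ins g0 i) (pr i), i := g0 i) = ins g0 (pr i)"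
  using pr_neq[of i] by (auto simp: ins_def fun_eq_iff)

lemma valid_ins: assumes "valid n L (ins g0 k)" "k < n" "i < n" shows "valid n L (ins g0 i)"
  unfolding valid_def
proof
  show "\<forall>j<n. \<forall>x\<in>set (ins g0 i j). x < n"
  proof (intro allI impI ballI)
    fix j x assume j: "j < n" and x: "x \<in> set (ins g0 i j)"
    have g0: "\<forall>x\<in>set (g0 j). x < n"
      using valid_lab[OF assms(1) j] by (cases "j = k") (auto simp: ins_def)
    show "x < n" using x g0 assms(3) by (cases "j = i") (auto simp: ins_def)
  qed
  show "length (W n (ins g0 i)) = L"
    using assms length_W_ins[of i n g0] length_W_ins[of k n g0] unfolding ins_def valid_def by simp
qed

lemma pr_mod: assumes "1 \<le> a" shows "pr (a mod n) = (a - 1) mod n"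
proof -
  have e1: "a mod n + n - 1 = a mod n + (n - 1)" using n1 by simp
  have e2: "a + (n - 1) = (a - 1) + n" using n1 assms by simp
  have "pr (a mod n) = (a mod n + (n - 1)) mod n" unfolding pr_def e1 ..
  also have "\<dots> = (a + (n - 1)) mod n" by (rule mod_add_left_eq)
  also have "\<dots> = ((a - 1) + n) mod n" unfolding e2 ..
  also have "\<dots> = (a - 1) mod n" by (rule mod_add_self2)
  finally show ?thesis .
qed

lemma mod_zero_iff: assumes "k < n" "s < n" shows "((k + n - s) mod n = 0) = (s = k)"
proof (cases "s \<le> k")
  case True
  then have e: "k + n - s = (k - s) + n" by simp
  have "(k + n - s) mod n = (k - s) mod n" unfolding e by (rule mod_add_self2)
  also have "\<dots> = k - s" using assms by simp
  finally show ?thesis using True by auto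
next
  case False
  then have "k + n - s < n" "0 < k + n - s" using assms by auto
  then show ?thesis using False by simp
qed

lemma cycle: assumes n2: "2 \<le> n" and v: "valid n L (ins g0 k)" and k: "k < n"
  shows "s \<le> n \<Longrightarrow> (W n (ins g0 k), rotate (if k < s then L-1 else 0) (W n (ins g0 ((k + n - s) mod n)))) \<in> RR\<^sup>*"
proof (induction s)
  case 0 then show ?case using k by simp
next
  case (Suc s)
  then have s: "s < n" by simp
  define i where "i = (k + n - s) mod n"
  define D where "D = (if k < s then L - 1 else 0)"
  have i: "i < n" using n1 by (simp add: i_def)
  have IH: "(W n (ins g0 k), rotate D (W n (ins g0 i))) \<in> RR\<^sup>*" using Suc s by (simp add: D_def i_def)
  have vi: "valid n L (ins g0 i)" using valid_ins[OF v k i] .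
  have gi: "ins g0 i i = i # g0 i" by (simp add: ins_def)
  have M: "(W n (ins g0 i), rotate (if i = 0 then L - 1 else 0) (W n (ins g0 (pr i)))) \<in> RR\<^sup>*"
    using M2[OF vi n2 i gi] ins_step[OF n2 i, of g0] by simp
  have M': "(rotate D (W n (ins g0 i)), rotate (D + (if i = 0 then L - 1 else 0)) (W n (ins g0 (pr i)))) \<in> RR\<^sup>*"
    using RRs_rot[OF M, of D] by (simp add: rotate_rotate)
  have pri: "pr i = (k + n - Suc s) mod n"
  proof -
    have "pr i = (k + n - s - 1) mod n" unfolding i_def using s by (intro pr_mod) simp
    then show ?thesis by simp
  qed
  have iz: "(i = 0) = (s = k)" unfolding i_def using mod_zero_iff[OF k s] .
  have DD: "D + (if i = 0 then L - 1 else 0) = (if k < Suc s then L - 1 else 0)"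
    unfolding D_def iz by auto
  show ?case using rtrancl_trans[OF IH M'] unfolding DD pri .
qed

lemma cycle_full: assumes n2: "2 \<le> n" and v: "valid n L (ins g0 k)" and k: "k < n"
  shows "(W n (ins g0 k), rotate (L-1) (W n (ins g0 k))) \<in> RR\<^sup>*"
  using cycle[OF n2 v k, of n] k by simp

lemma M2_AE: assumes v: "valid n L g" and n2: "2 \<le> n" and k: "k < n" and gk: "g k = k # t"
  shows "valid n L (g(pr k := pr k # g (pr k), k := t)) \<and> AE g (g(pr k := pr k # g (pr k), k := t))"
proof -
  define g0 where "g0 = g(k := t)"
  define h where "h = g(pr k := pr k # g (pr k), k := t)"
  define \<delta> where "\<delta> = (if k = 0 then L - 1 else 0)"
  have g: "ins g0 k = g" using gk by (auto simp: ins_def g0_def fun_eq_iff)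
  have h: "ins g0 (pr k) = h" using pr_neq[OF n2 k] by (auto simp: ins_def g0_def h_def fun_eq_iff)
  have fw: "valid n L h \<and> (W n g, rotate \<delta> (W n h)) \<in> RR\<^sup>*" using M2[OF v n2 k gk] by (simp add: h_def \<delta>_def)
  have vg0: "valid n L (ins g0 k)" using g v by simp
  have prk: "pr k < n" by (rule pr_lt)
  have e: "(pr k + n - (n - 1)) mod n = k"
  proof (cases "k = 0")
    case True then show ?thesis using n2 by (simp add: pr_0)
  next
    case False then show ?thesis using n2 k by (simp add: pr_pos)
  qed
  have "(W n h, rotate (if pr k < n - 1 then L - 1 else 0) (W n g)) \<in> RR\<^sup>*"
    using cycle[OF n2 valid_ins[OF vg0 k prk] prk, of "n - 1"] unfolding e g h by simp
  then obtain D where cyc: "(W n h, rotate D (W n g)) \<in> RR\<^sup>*" by blast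
  have c1: "(rotate \<delta> (W n h), rotate (\<delta> + D) (W n g)) \<in> RR\<^sup>*"
    using RRs_rot[OF cyc, of \<delta>] by (simp add: rotate_rotate)
  have lg: "length (W n g) = L" using v by (simp add: valid_def)
  have c2: "(rotate (\<delta> + D) (W n g), rotate 0 (W n g)) \<in> RR\<^sup>*"
    using Rot[OF cycle_full[OF n2 vg0 k, unfolded g] lg] .
  have "(rotate \<delta> (W n h), W n g) \<in> RR\<^sup>*" using rtrancl_trans[OF c1 c2] by simp
  then have "E (W n g) (rotate \<delta> (W n h))" using fw unfolding E_def by simp
  then show ?thesis using fw unfolding AE_def h_def by blast
qed

end


definition cnt :: "nat \<Rightarrow> nat list \<Rightarrow> nat" where "cnt k xs = length (filter (\<lambda>x. x = k) xs)"

context irr begin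

lemma sweep: assumes n2: "2 \<le> n" and k: "k < n"
  shows "valid n L g \<Longrightarrow> g k = xs \<Longrightarrow>
    valid n L (g(pr k := replicate (cnt k xs) (pr k) @ g (pr k) @ filter (\<lambda>y. y \<noteq> k) xs, k := [])) \<and>
    AE g (g(pr k := replicate (cnt k xs) (pr k) @ g (pr k) @ filter (\<lambda>y. y \<noteq> k) xs, k := []))"
proof (induction xs arbitrary: g)
  case Nil
  have "g(pr k := g (pr k), k := []) = g" using Nil by (auto simp: fun_eq_iff)
  then show ?case using Nil AE_refl by (simp add: cnt_def)
next
  case (Cons x xs)
  have prk: "pr k \<noteq> k" using pr_neq[OF n2 k] .
  show ?case
  proof (cases "x = k")
    case True
    define g1 where "g1 = g(pr k := pr k # g (pr k), k := xs)"
    have m: "valid n L g1 \<and> AE g g1" using M2_AE[OF Cons.prems(1) n2 k] Cons.prems(2) True by (simp add: g1_def)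
    have g1k: "g1 k = xs" by (simp add: g1_def)
    note IH = Cons.IH[OF conjunct1[OF m] g1k]
    have eq: "g1(pr k := replicate (cnt k xs) (pr k) @ g1 (pr k) @ filter (\<lambda>y. y \<noteq> k) xs, k := [])
       = g(pr k := replicate (cnt k (x # xs)) (pr k) @ g (pr k) @ filter (\<lambda>y. y \<noteq> k) (x # xs), k := [])"
      using prk True by (auto simp: g1_def cnt_def fun_eq_iff replicate_app_Cons_same)
    show ?thesis using IH m AE_trans unfolding eq by blast
  next
    case False
    define g1 where "g1 = g(pr k := g (pr k) @ [x], k := xs)"
    have m: "valid n L g1 \<and> AE g g1" using M1[OF Cons.prems(1) n2 k] Cons.prems(2) False by (simp add: g1_def)
    have g1k: "g1 k = xs" by (simp add: g1_def)
    note IH = Cons.IH[OF conjunct1[OF m] g1k]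
    have eq: "g1(pr k := replicate (cnt k xs) (pr k) @ g1 (pr k) @ filter (\<lambda>y. y \<noteq> k) xs, k := [])
       = g(pr k := replicate (cnt k (x # xs)) (pr k) @ g (pr k) @ filter (\<lambda>y. y \<noteq> k) (x # xs), k := [])"
      using prk False by (auto simp: g1_def cnt_def fun_eq_iff)
    show ?thesis using IH m AE_trans unfolding eq by blast
  qed
qed

lemma stage1: assumes n2: "2 \<le> n" and v: "valid n L g"
  shows "t \<le> n - 1 \<Longrightarrow> \<exists>h. valid n L h \<and> AE g h \<and> (\<forall>i. n - t \<le> i \<and> i < n \<longrightarrow> h i = [])"
proof (induction t)
  case 0 then show ?case using v AE_refl by auto
next
  case (Suc t)
  then obtain h where h: "valid n L h" "AE g h" "\<forall>i. n - t \<le> i \<and> i < n \<longrightarrow> h i = []" by auto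
  define k where "k = n - 1 - t"
  have k: "k < n" "1 \<le> k" using Suc.prems n2 by (auto simp: k_def)
  have prk: "pr k = k - 1" using k by (simp add: pr_pos)
  note sw = sweep[OF n2 k(1) h(1) refl]
  define h' where "h' = h(pr k := replicate (cnt k (h k)) (pr k) @ h (pr k) @ filter (\<lambda>y. y \<noteq> k) (h k), k := [])"
  have "valid n L h'" "AE g h'" using sw AE_trans[OF h(2)] by (auto simp: h'_def)
  moreover have "\<forall>i. n - Suc t \<le> i \<and> i < n \<longrightarrow> h' i = []"
  proof (intro allI impI)
    fix i assume i: "n - Suc t \<le> i \<and> i < n"
    show "h' i = []"
    proof (cases "i = k")
      case True then show ?thesis by (simp add: h'_def)
    next
      case False
      then have "n - t \<le> i" "i \<noteq> pr k" using i prk k by (auto simp: k_def)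
      then show ?thesis using h(3) i False by (simp add: h'_def)
    qed
  qed
  ultimately show ?case by blast
qed

lemma stage2: assumes n2: "2 \<le> n" and v: "valid n L g"
  shows "\<exists>h. valid n L h \<and> AE g h \<and> (\<forall>i<n. i \<noteq> n - 1 \<longrightarrow> h i = []) \<and> (\<forall>x\<in>set (h (n-1)). 1 \<le> x \<and> x \<le> n - 1)"
proof -
  obtain h where h: "valid n L h" "AE g h" "\<forall>i. n - (n - 1) \<le> i \<and> i < n \<longrightarrow> h i = []"
    using stage1[OF n2 v, of "n-1"] by auto
  have n0: "0 < n" using n2 by simp
  have pr0: "pr 0 = n - 1" by (rule pr_0)
  note sw = sweep[OF n2 n0 h(1) refl]
  define h' where "h' = h(pr 0 := replicate (cnt 0 (h 0)) (pr 0) @ h (pr 0) @ filter (\<lambda>y. y \<noteq> 0) (h 0), 0 := [])"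
  have hn: "h (n-1) = []" using h(3) n2 by simp
  have "valid n L h'" "AE g h'" using sw AE_trans[OF h(2)] by (auto simp: h'_def)
  moreover have "\<forall>i<n. i \<noteq> n - 1 \<longrightarrow> h' i = []"
    using h(3) by (auto simp: h'_def pr0)
  moreover have "\<forall>x\<in>set (h' (n-1)). 1 \<le> x \<and> x \<le> n - 1"
  proof
    fix x assume "x \<in> set (h' (n-1))"
    then have "x = n - 1 \<or> (x \<in> set (h 0) \<and> x \<noteq> 0)" using hn n2 by (auto simp: h'_def pr0)
    moreover have "x \<in> set (h 0) \<Longrightarrow> x < n" using valid_lab[OF h(1) n0] by blast
    ultimately show "1 \<le> x \<and> x \<le> n - 1" using n2 by auto
  qed
  ultimately show ?thesis by blast
qed

lemma stage3: assumes n2: "2 \<le> n" and v: "valid n L g"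
  shows "t \<le> n - 2 \<Longrightarrow> \<exists>h. valid n L h \<and> AE g h \<and> (\<forall>i<n. i \<noteq> n - 1 - t \<longrightarrow> h i = [])
      \<and> (\<forall>x\<in>set (h (n - 1 - t)). 1 \<le> x \<and> x \<le> n - 1 - t)"
proof (induction t)
  case 0 then show ?case using stage2[OF n2 v] by simp
next
  case (Suc t)
  then obtain h where h: "valid n L h" "AE g h" "\<forall>i<n. i \<noteq> n - 1 - t \<longrightarrow> h i = []"
     "\<forall>x\<in>set (h (n - 1 - t)). 1 \<le> x \<and> x \<le> n - 1 - t" by auto
  define k where "k = n - 1 - t"
  have k: "k < n" "2 \<le> k" using Suc.prems n2 by (auto simp: k_def)
  have prk: "pr k = k - 1" using k by (simp add: pr_pos)
  have km: "n - 1 - Suc t = k - 1" by (simp add: k_def)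
  note sw = sweep[OF n2 k(1) h(1) refl]
  define h' where "h' = h(pr k := replicate (cnt k (h k)) (pr k) @ h (pr k) @ filter (\<lambda>y. y \<noteq> k) (h k), k := [])"
  have hk1: "h (k - 1) = []" using h(3) k by (simp add: k_def)
  have "valid n L h'" "AE g h'" using sw AE_trans[OF h(2)] by (auto simp: h'_def)
  moreover have "\<forall>i<n. i \<noteq> n - 1 - Suc t \<longrightarrow> h' i = []"
  proof (intro allI impI)
    fix i assume i: "i < n" "i \<noteq> n - 1 - Suc t"
    have hk: "\<forall>i<n. i \<noteq> k \<longrightarrow> h i = []" using h(3) unfolding k_def .
    show "h' i = []"
    proof (cases "i = k")
      case True then show ?thesis by (simp add: h'_def)
    next
      case False
      have "i \<noteq> pr k" using i(2) unfolding km prk .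
      then show ?thesis using False hk i(1) by (simp add: h'_def)
    qed
  qed
  moreover have "\<forall>x\<in>set (h' (n - 1 - Suc t)). 1 \<le> x \<and> x \<le> n - 1 - Suc t"
  proof
    fix x assume "x \<in> set (h' (n - 1 - Suc t))"
    moreover have kk: "k - 1 \<noteq> k" using k by simp
    ultimately have "x = k - 1 \<or> (x \<in> set (h k) \<and> x \<noteq> k)" unfolding km using hk1 k prk
      by (auto simp: h'_def)
    then show "1 \<le> x \<and> x \<le> n - 1 - Suc t" unfolding km using h(4) k unfolding k_def[symmetric] by auto
  qed
  ultimately show ?case by blast
qed

lemma length_W_single: assumes "\<forall>i. 1 \<le> i \<and> i < n \<longrightarrow> f i = []"
  shows "length (W n f) = n + length (f 0)"
proof -
  have "(\<Sum>i<n. Suc (length (f i))) = (\<Sum>i<n. 1 + (if i = 0 then length (f 0) else 0))"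
    using assms by (intro sum.cong) auto
  also have "\<dots> = (\<Sum>i<n. 1) + (\<Sum>i<n. (if i = 0 then length (f 0) else 0))" by (rule sum.distrib)
  also have "\<dots> = n + length (f 0)" using n1 by simp
  finally show ?thesis by (simp add: length_W)
qed

definition N :: "nat \<Rightarrow> nat list" where "N = (\<lambda>i. if i = 0 then replicate (L - n) 0 else [])"

lemma valid_N: "valid n L N"
  unfolding valid_def
proof
  show "\<forall>k<n. \<forall>x\<in>set (N k). x < n" using n1 by (auto simp: N_def)
  have "length (W n N) = n + length (N 0)" by (rule length_W_single) (auto simp: N_def)
  then show "length (W n N) = L" using nL by (simp add: N_def)
qed

lemma AE_N: assumes n2: "2 \<le> n" and v: "valid n L g" shows "AE g N"
proof -
  obtain h where h: "valid n L h" "AE g h" "\<forall>i<n. i \<noteq> 1 \<longrightarrow> h i = []"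
      "\<forall>x\<in>set (h 1). 1 \<le> x \<and> x \<le> 1"
    using stage3[OF n2 v, of "n-2"] n2 by auto
  have one: "1 < n" using n2 by simp
  have pr1: "pr 1 = 0" using one by (simp add: pr_pos)
  note sw = sweep[OF n2 one h(1) refl, unfolded pr1]
  define h' where "h' = h(0 := replicate (cnt 1 (h 1)) 0 @ h 0 @ filter (\<lambda>y. y \<noteq> 1) (h 1), 1 := [])"
  have all1: "\<forall>x\<in>set (h 1). x = 1" using h(4) by auto
  have f: "filter (\<lambda>y. y \<noteq> 1) (h 1) = []" using all1 by (auto simp: filter_empty_conv)
  have c: "cnt 1 (h 1) = length (h 1)" using all1 by (simp add: cnt_def)
  have h0: "h 0 = []" using h(3) n2 by simp
  have h'0: "h' 0 = replicate (length (h 1)) 0" unfolding h'_def f c h0 by simp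
  have h'i: "\<forall>i. 1 \<le> i \<and> i < n \<longrightarrow> h' i = []" using h(3) by (auto simp: h'_def)
  have vh': "valid n L h'" "AE g h'" using sw AE_trans[OF h(2)] by (auto simp: h'_def)
  have "length (W n h') = n + length (h' 0)" using h'i by (rule length_W_single)
  then have "n + length (h 1) = L" using vh'(1) h'0 by (simp add: valid_def)
  then have "length (h 1) = L - n" by linarith
  then have "W n h' = W n N" using h'0 h'i by (intro W_cong) (auto simp: N_def)
  then show ?thesis using vh'(2) unfolding AE_def by simp
qed

lemma Rot_N: assumes n2: "2 \<le> n" shows "(rotate a (W n N), rotate b (W n N)) \<in> RR\<^sup>*"
proof -
  define N0 where "N0 = N(0 := replicate (L - n - 1) 0)"
  obtain m where m: "L - n = Suc m" using nL by (cases "L - n") auto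
  then have m': "L - n - 1 = m" by simp
  have "ins N0 0 = N" unfolding ins_def N0_def N_def m m' by (auto simp: fun_eq_iff)
  then have c: "(W n N, rotate (L-1) (W n N)) \<in> RR\<^sup>*"
    using cycle_full[of N0 0] n2 valid_N n1 by simp
  have "length (W n N) = L" using valid_N by (simp add: valid_def)
  then show ?thesis using Rot[OF c] by blast
qed

lemma main2: assumes n2: "2 \<le> n" and x: "x \<in> Omega L n" and y: "y \<in> Omega L n"
  shows "(x, y) \<in> RR\<^sup>*"
proof -
  obtain a g1 where g1: "valid n L g1" "x = rotate a (W n g1)" using Omega_decomp[OF x n1] by blast
  obtain b g2 where g2: "valid n L g2" "y = rotate b (W n g2)" using Omega_decomp[OF y n1] by blast
  obtain d1 where d1: "E (W n g1) (rotate d1 (W n N))" using AE_N[OF n2 g1(1)] unfolding AE_def by blast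
  obtain d2 where d2: "E (W n g2) (rotate d2 (W n N))" using AE_N[OF n2 g2(1)] unfolding AE_def by blast
  have 1: "(x, rotate (a + d1) (W n N)) \<in> RR\<^sup>*"
    using E_rot[OF d1, of a] unfolding E_def g1(2) by (simp add: rotate_rotate)
  have 2: "(rotate (a + d1) (W n N), rotate (b + d2) (W n N)) \<in> RR\<^sup>*" by (rule Rot_N[OF n2])
  have 3: "(rotate (b + d2) (W n N), y) \<in> RR\<^sup>*"
    using E_rot[OF d2, of b] unfolding E_def g2(2) by (simp add: rotate_rotate)
  show ?thesis using rtrancl_trans[OF rtrancl_trans[OF 1 2] 3] .
qed

end


lemma t2_full: assumes "2 \<le> length w" "w ! 0 = Bul k"
  shows "t2_res n w 0 (length w) k = rotate (length w - 1) w"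
proof (rule nth_equalityI)
  let ?L = "length w"
  show "length (t2_res n w 0 ?L k) = length (rotate (?L - 1) w)" by (simp add: t2_res_def Let_def)
  fix x assume "x < length (t2_res n w 0 ?L k)"
  then have x: "x < ?L" by (simp add: t2_res_def Let_def)
  have T: "t2_res n w 0 ?L k ! x = (let r = (0 + 1 + ?L - x) mod ?L in
       if r = 0 then Bul k
       else if r < ?L then wat w (x + ?L - 1)
       else if r = ?L then Box ((k + n - 1) mod n)
       else w ! x)" using x by (simp add: t2_res_def Let_def)
  have R: "rotate (?L - 1) w ! x = w ! ((?L - 1 + x) mod ?L)" using x by (simp add: nth_rotate)
  show "t2_res n w 0 ?L k ! x = rotate (?L - 1) w ! x"
  proof (cases "x = 1")
    case True
    have "(0 + 1 + ?L - x) mod ?L = 0" using True by simp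
    moreover have "?L - 1 + x = ?L" using True assms(1) by simp
    then have "(?L - 1 + x) mod ?L = 0" by simp
    ultimately show ?thesis unfolding T R using assms(2) by simp
  next
    case False
    have r0: "(0 + 1 + ?L - x) mod ?L \<noteq> 0"
    proof (cases "x = 0")
      case True
      have e: "0 + 1 + ?L - x = 1 + ?L" using True by simp
      have "(1 + ?L) mod ?L = 1 mod ?L" by (rule mod_add_self2)
      also have "\<dots> = 1" using assms(1) by simp
      finally show ?thesis unfolding e by simp
    next
      case False
      then have "0 < 1 + ?L - x" "1 + ?L - x < ?L" using \<open>x \<noteq> 1\<close> x by auto
      then show ?thesis by simp
    qed
    have L0: "0 < ?L" using x by linarith
    have rl: "(0 + 1 + ?L - x) mod ?L < ?L" using L0 by (rule mod_less_divisor)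
    have "wat w (x + ?L - 1) = w ! ((?L - 1 + x) mod ?L)"
      unfolding wat_def using x by (simp add: add.commute)
    then show ?thesis unfolding T R using r0 rl by simp
  qed
qed

context irr begin

definition X1 :: "letter list" where "X1 = Bul 0 # replicate (L - 1) (Box 0)"

lemma n1_W: assumes "n = 1" "valid n L g" shows "W n g = X1"
proof -
  have W: "W n g = Bul 0 # map Box (g 0)" using assms(1) by (simp add: W_def seg_def)
  have "\<forall>y\<in>set (g 0). y = 0" using valid_lab[OF assms(2), of 0] assms(1) by auto
  then have g0: "g 0 = replicate (length (g 0)) 0" by (simp add: replicate_length_same)
  have "length (W n g) = L" using assms(2) by (simp add: valid_def)
  then have "length (g 0) = L - 1" using W by simp
  then show ?thesis unfolding W X1_def using g0 by (metis map_replicate)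
qed

lemma n1_step: assumes "n = 1" shows "(X1, rotate (L-1) X1) \<in> RR\<^sup>*"
proof -
  have L2: "2 \<le> L" using assms nL by simp
  have lX: "length X1 = L" using L1 by (simp add: X1_def)
  define g0 where "g0 = (\<lambda>i::nat. replicate (L - 1) (0::nat))"
  have vg: "valid n L g0" unfolding valid_def g0_def using assms L1 by (simp add: W_def seg_def)
  have WX: "W n g0 = X1" using n1_W[OF assms vg] .
  have O1: "X1 \<in> Omega L n" using valid_Omega[OF vg] WX by simp
  have O2: "rotate (L-1) X1 \<in> Omega L n" using O1 by (rule Omega_rotate)
  have X0: "X1 ! 0 = Bul 0" by (simp add: X1_def)
  have Xi: "\<And>i. 1 \<le> i \<Longrightarrow> i < L \<Longrightarrow> X1 ! i = Box 0"
    by (auto simp: X1_def nth_Cons split: nat.splits)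
  have ne: "X1 \<noteq> rotate (L-1) X1"
  proof -
    have "rotate (L-1) X1 ! 0 = X1 ! (L - 1)" using lX L1 by (simp add: nth_rotate)
    also have "\<dots> = Box 0" using Xi L2 by simp
    finally show ?thesis using X0 by auto
  qed
  have pd: "prev_dist X1 0 = L"
    unfolding prev_dist_def lX
  proof (rule Least_equality)
    show "1 \<le> L \<and> is_bul (wat X1 (0 + L - L))" using L1 X0 lX by (simp add: wat_def)
    fix m assume P: "1 \<le> m \<and> is_bul (wat X1 (0 + L - m))"
    show "L \<le> m"
    proof (rule ccontr)
      assume "\<not> L \<le> m"
      then have "wat X1 (0 + L - m) = X1 ! (L - m)" using lX P by (simp add: wat_def)
      also have "\<dots> = Box 0" using Xi P \<open>\<not> L \<le> m\<close> by simp
      finally show False using P by simp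
    qed
  qed
  have w0: "wat X1 0 = Bul 0" "wat X1 (0 + 1) = Box 0" using lX L2 X0 Xi by (simp_all add: wat_def)
  have wL: "wat X1 (0 + L - L) = Bul ((0 + n - 1) mod n)" using assms X0 lX L1 by (simp add: wat_def)
  have t: "t2_res n X1 0 L 0 = rotate (L - 1) X1" using t2_full[of X1 0 n] L2 lX X0 by simp
  have "rate_T2 n p X1 (rotate (L-1) X1) 0 = p 0"
    unfolding rate_T2_def Let_def lX pd w0 wL using t by simp
  moreover have "p 0 > 0" using pq assms by simp
  ultimately have "Step n p q X1 (rotate (L-1) X1)" unfolding Step_def using lX L1 by (intro exI[of _ 0]) auto
  then show ?thesis using step_RR O1 O2 ne by blast
qed

lemma main1: assumes n: "n = 1" and x: "x \<in> Omega L n" and y: "y \<in> Omega L n"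
  shows "(x, y) \<in> RR\<^sup>*"
proof -
  obtain a g1 where g1: "valid n L g1" "x = rotate a (W n g1)" using Omega_decomp[OF x n1] by blast
  obtain b g2 where g2: "valid n L g2" "y = rotate b (W n g2)" using Omega_decomp[OF y n1] by blast
  have lX: "length X1 = L" using L1 by (simp add: X1_def)
  show ?thesis using Rot[OF n1_step[OF n] lX, of a b] n1_W[OF n g1(1)] n1_W[OF n g2(1)] g1(2) g2(2) by simp
qed

lemma main: "irreducible_ctmc (Omega L n) (Q_rate n p q)"
  unfolding irreducible_ctmc_def
proof (intro ballI)
  fix x y assume x: "x \<in> Omega L n" and y: "y \<in> Omega L n"
  have "(x, y) \<in> RR\<^sup>*"
  proof (cases "n = 1")
    case True then show ?thesis using main1 x y by blast
  next
    case False then have "2 \<le> n" using n1 by simp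
    then show ?thesis using main2 x y by blast
  qed
  then show "(x, y) \<in> {(a, b). a \<in> Omega L n \<and> b \<in> Omega L n \<and> a \<noteq> b \<and> 0 < Q_rate n p q a b}\<^sup>*"
    using rtrancl_mono[OF RR_sub] by blast
qed

end

theorem proposition4p1:
  fixes L n :: nat and p q :: "nat \<Rightarrow> real"
  assumes "1 \<le> L" and "1 \<le> n" and "n < L"
    and "\<forall>k<n. p k > 0 \<and> q k > 0"
  shows "irreducible_ctmc (Omega L n) (Q_rate n p q)"
proof -
  interpret irr n L p q using assms by unfold_locales auto
  show ?thesis by (rule main)
qed


end
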